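(* Under the standing assumptions and notation of the context, let $M=\begin{pmatrix}A & BR^{-1}B^*\\ Q & -A^*\end{pmatrix}$ on $X\times X$ with domain $D(A)\times D(A^* )$, and let $\mathcal T=\begin{pmatrix}\mathrm{id}&\mathrm{id}\\ -N&-P\end{pmatrix}\in L(X\times X)$. Then $\Delta=P-N$ is a boundedly invertible, selfadjoint, positive definite operator, $\mathcal T$ is boundedly invertible with $$\mathcal T^{-1}=\begin{pmatrix}\Delta^{-1}P&\Delta^{-1}\\ -\Delta^{-1}N&-\Delta^{-1}\end{pmatrix},$$ and $$\mathcal T^{-1}M\mathcal T=\begin{pmatrix}A_+&0\\0&A_-\end{pmatrix}.$$ Moreover $\Delta A_-+A_+^*\Delta=0$, so that the spectrum of $A_-$ is the negative of the spectrum of $A_+$.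
   Context: Let $X,U$ be real Hilbert spaces (identified with their duals). Let $A:D(A)\to X$ generate a $C_0$ group $(e^{tA})_{t\in\mathbb R}$ on $X$, let $B\in L(U,X)$, and let $Q\in L(X)$, $R\in L(U)$ be selfadjoint, positive definite and boundedly invertible. Assume exact controllability: there is $T_0>0$ such that for every $T>T_0$ the system $\dot y=Ay+Bu$ is exactly controllable in $X$ in time $T$ with controls $u\in L^2([0,T],U)$. Riccati operators: $P\in L(X)$ is the unique nonnegative selfadjoint solution of the algebraic Riccati equation $A^*\mathtt X+\mathtt XA-\mathtt XBR^{-1}B^*\mathtt X=-Q$ (it is positive definite and boundedly invertible), and $N\in L(X)$ is the unique nonpositive selfadjoint solution of the same equation (negative definite and boundedly invertible). Set $A_-=A-BR^{-1}B^*P$ and $A_+=A-BR^{-1}B^*N$, both with domain $D(A)$. *)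

theory Defs
  imports "HOL-Analysis.Analysis"
begin

definition is_badjoint :: "('a::real_inner \<Rightarrow>\<^sub>L 'b::real_inner) \<Rightarrow> ('b \<Rightarrow>\<^sub>L 'a) \<Rightarrow> bool" where
  "is_badjoint S Sa \<longleftrightarrow> (\<forall>x y. inner (blinfun_apply S x) y = inner x (blinfun_apply Sa y))"

definition selfadjoint_op :: "('a::real_inner \<Rightarrow>\<^sub>L 'a) \<Rightarrow> bool" where
  "selfadjoint_op S \<longleftrightarrow> is_badjoint S S"

definition posdef_op :: "('a::real_inner \<Rightarrow>\<^sub>L 'a) \<Rightarrow> bool" where
  "posdef_op S \<longleftrightarrow> (\<forall>x. x \<noteq> 0 \<longrightarrow> inner (blinfun_apply S x) x > 0)"

definition nonneg_op :: "('a::real_inner \<Rightarrow>\<^sub>L 'a) \<Rightarrow> bool" where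
  "nonneg_op S \<longleftrightarrow> (\<forall>x. inner (blinfun_apply S x) x \<ge> 0)"

definition nonpos_op :: "('a::real_inner \<Rightarrow>\<^sub>L 'a) \<Rightarrow> bool" where
  "nonpos_op S \<longleftrightarrow> (\<forall>x. inner (blinfun_apply S x) x \<le> 0)"

definition negdef_op :: "('a::real_inner \<Rightarrow>\<^sub>L 'a) \<Rightarrow> bool" where
  "negdef_op S \<longleftrightarrow> (\<forall>x. x \<noteq> 0 \<longrightarrow> inner (blinfun_apply S x) x < 0)"

definition is_binverse :: "('a::real_normed_vector \<Rightarrow>\<^sub>L 'b::real_normed_vector) \<Rightarrow> ('b \<Rightarrow>\<^sub>L 'a) \<Rightarrow> bool" where
  "is_binverse S Si \<longleftrightarrow> Si o\<^sub>L S = id_blinfun \<and> S o\<^sub>L Si = id_blinfun"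

definition binvertible :: "('a::real_normed_vector \<Rightarrow>\<^sub>L 'b::real_normed_vector) \<Rightarrow> bool" where
  "binvertible S \<longleftrightarrow> (\<exists>Si. is_binverse S Si)"

definition c0_group :: "(real \<Rightarrow> ('a::real_normed_vector \<Rightarrow>\<^sub>L 'a)) \<Rightarrow> bool" where
  "c0_group G \<longleftrightarrow> G 0 = id_blinfun \<and> (\<forall>s t. G (s + t) = G s o\<^sub>L G t)
     \<and> (\<forall>x. continuous_on UNIV (\<lambda>t. blinfun_apply (G t) x))"

text \<open>An (unbounded) operator is a pair of a domain and a function (whose values
outside the domain are irrelevant).  The generator is defined by the usual
one-sided difference quotient at 0.\<close>

definition is_generator :: "(real \<Rightarrow> ('a::real_normed_vector \<Rightarrow>\<^sub>L 'a)) \<Rightarrow> 'a set \<Rightarrow> ('a \<Rightarrow> 'a) \<Rightarrow> bool" where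
  "is_generator G D A \<longleftrightarrow>
     D = {x. \<exists>y. ((\<lambda>h. (1/h) *\<^sub>R (blinfun_apply (G h) x - x)) \<longlongrightarrow> y) (at_right 0)}
     \<and> (\<forall>x\<in>D. ((\<lambda>h. (1/h) *\<^sub>R (blinfun_apply (G h) x - x)) \<longlongrightarrow> A x) (at_right 0))"

definition adj_dom :: "'a::real_inner set \<Rightarrow> ('a \<Rightarrow> 'a) \<Rightarrow> 'a set" where
  "adj_dom D A = {y. \<exists>z. \<forall>x\<in>D. inner (A x) y = inner x z}"

definition adj_op :: "'a::real_inner set \<Rightarrow> ('a \<Rightarrow> 'a) \<Rightarrow> 'a \<Rightarrow> 'a" where
  "adj_op D A y = (SOME z. \<forall>x\<in>D. inner (A x) y = inner x z)"

text \<open>Controls in L^2([0,T],U): (Lebesgue-)measurable, separably valued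
(so strongly measurable, by Pettis), with square integrable norm.  The final
state of the mild solution uses the Henstock-Kurzweil integral, which agrees
with the Bochner integral for such integrands.\<close>

definition L2_control :: "real \<Rightarrow> (real \<Rightarrow> 'u::real_normed_vector) \<Rightarrow> bool" where
  "L2_control T u \<longleftrightarrow> u \<in> borel_measurable (lebesgue_on {0..T})
     \<and> (\<exists>C. countable C \<and> u ` {0..T} \<subseteq> closure C)
     \<and> integrable (lebesgue_on {0..T}) (\<lambda>s. (norm (u s))\<^sup>2)"

definition exactly_controllable ::
  "(real \<Rightarrow> ('x::real_normed_vector \<Rightarrow>\<^sub>L 'x)) \<Rightarrow> ('u::real_normed_vector \<Rightarrow>\<^sub>L 'x) \<Rightarrow> real \<Rightarrow> bool" where
  "exactly_controllable G B T \<longleftrightarrow>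
     (\<forall>x0 x1. \<exists>u v. L2_control T u
        \<and> ((\<lambda>s. blinfun_apply (G (T - s)) (blinfun_apply B (u s))) has_integral v) {0..T}
        \<and> x1 = blinfun_apply (G T) x0 + v)"

definition riccati_sol ::
  "'x::real_inner set \<Rightarrow> ('x \<Rightarrow> 'x) \<Rightarrow> ('u::real_inner \<Rightarrow>\<^sub>L 'x) \<Rightarrow> ('x \<Rightarrow>\<^sub>L 'u) \<Rightarrow> ('u \<Rightarrow>\<^sub>L 'u)
    \<Rightarrow> ('x \<Rightarrow>\<^sub>L 'x) \<Rightarrow> ('x \<Rightarrow>\<^sub>L 'x) \<Rightarrow> bool" where
  "riccati_sol D A B Bs Ri Q Y \<longleftrightarrow>
     (\<forall>x\<in>D. \<forall>y\<in>D. inner (blinfun_apply Y (A x)) y + inner (blinfun_apply Y x) (A y)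
        - inner (blinfun_apply Y (blinfun_apply B (blinfun_apply Ri (blinfun_apply Bs (blinfun_apply Y x))))) y
        = - inner (blinfun_apply Q x) y)"

definition closed_loop ::
  "('x::real_normed_vector \<Rightarrow> 'x) \<Rightarrow> ('u::real_normed_vector \<Rightarrow>\<^sub>L 'x) \<Rightarrow> ('x \<Rightarrow>\<^sub>L 'u) \<Rightarrow> ('u \<Rightarrow>\<^sub>L 'u)
    \<Rightarrow> ('x \<Rightarrow>\<^sub>L 'x) \<Rightarrow> 'x \<Rightarrow> 'x" where
  "closed_loop A B Bs Ri Y x = A x - blinfun_apply B (blinfun_apply Ri (blinfun_apply Bs (blinfun_apply Y x)))"

definition hamiltonian ::
  "'x::real_inner set \<Rightarrow> ('x \<Rightarrow> 'x) \<Rightarrow> ('u::real_inner \<Rightarrow>\<^sub>L 'x) \<Rightarrow> ('x \<Rightarrow>\<^sub>L 'u) \<Rightarrow> ('u \<Rightarrow>\<^sub>L 'u)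
    \<Rightarrow> ('x \<Rightarrow>\<^sub>L 'x) \<Rightarrow> 'x \<times> 'x \<Rightarrow> 'x \<times> 'x" where
  "hamiltonian D A B Bs Ri Q z =
     (A (fst z) + blinfun_apply B (blinfun_apply Ri (blinfun_apply Bs (snd z))),
      blinfun_apply Q (fst z) - adj_op D A (snd z))"

definition hamiltonian_dom :: "'x::real_inner set \<Rightarrow> ('x \<Rightarrow> 'x) \<Rightarrow> ('x \<times> 'x) set" where
  "hamiltonian_dom D A = D \<times> adj_dom D A"

definition Tmat :: "('x::real_normed_vector \<Rightarrow>\<^sub>L 'x) \<Rightarrow> ('x \<Rightarrow>\<^sub>L 'x) \<Rightarrow> 'x \<times> 'x \<Rightarrow> 'x \<times> 'x" where
  "Tmat N P z = (fst z + snd z, - blinfun_apply N (fst z) - blinfun_apply P (snd z))"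

definition Tinv_mat :: "('x::real_normed_vector \<Rightarrow>\<^sub>L 'x) \<Rightarrow> ('x \<Rightarrow>\<^sub>L 'x) \<Rightarrow> ('x \<Rightarrow>\<^sub>L 'x) \<Rightarrow> 'x \<times> 'x \<Rightarrow> 'x \<times> 'x" where
  "Tinv_mat Di N P z =
     (blinfun_apply Di (blinfun_apply P (fst z)) + blinfun_apply Di (snd z),
      - blinfun_apply Di (blinfun_apply N (fst z)) - blinfun_apply Di (snd z))"

text \<open>Via the complexification X_C = X \<times> X (pairs (x,y) meaning x + i y); the
complexified operator has domain D \<times> D.  lambda - A_C acting on (x,y):\<close>

definition cshift_op :: "('x::real_normed_vector \<Rightarrow> 'x) \<Rightarrow> complex \<Rightarrow> 'x \<times> 'x \<Rightarrow> 'x \<times> 'x" where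
  "cshift_op A l z =
     (Re l *\<^sub>R fst z - Im l *\<^sub>R snd z - A (fst z),
      Im l *\<^sub>R fst z + Re l *\<^sub>R snd z - A (snd z))"

definition in_resolvent :: "'x::real_normed_vector set \<Rightarrow> ('x \<Rightarrow> 'x) \<Rightarrow> complex \<Rightarrow> bool" where
  "in_resolvent D A l \<longleftrightarrow>
     (\<exists>Rl :: ('x \<times> 'x) \<Rightarrow>\<^sub>L ('x \<times> 'x).
        (\<forall>z. blinfun_apply Rl z \<in> D \<times> D \<and> cshift_op A l (blinfun_apply Rl z) = z)
        \<and> (\<forall>w\<in>D \<times> D. blinfun_apply Rl (cshift_op A l w) = w))"

definition op_spectrum :: "'x::real_normed_vector set \<Rightarrow> ('x \<Rightarrow> 'x) \<Rightarrow> complex set" where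
  "op_spectrum D A = {l. \<not> in_resolvent D A l}"

end

theory Submission
  imports Defs
begin

typedef 'a hw = "UNIV :: 'a set" by simp

setup_lifting type_definition_hw

instantiation hw :: (real_normed_vector) real_normed_vector
begin
lift_definition zero_hw :: "'a hw" is 0 .
lift_definition plus_hw :: "'a hw \<Rightarrow> 'a hw \<Rightarrow> 'a hw" is "(+)" .
lift_definition minus_hw :: "'a hw \<Rightarrow> 'a hw \<Rightarrow> 'a hw" is "(-)" .
lift_definition uminus_hw :: "'a hw \<Rightarrow> 'a hw" is uminus .
lift_definition scaleR_hw :: "real \<Rightarrow> 'a hw \<Rightarrow> 'a hw" is scaleR .
lift_definition norm_hw :: "'a hw \<Rightarrow> real" is norm .
lift_definition sgn_hw :: "'a hw \<Rightarrow> 'a hw" is sgn .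
lift_definition dist_hw :: "'a hw \<Rightarrow> 'a hw \<Rightarrow> real" is dist .
definition uniformity_hw :: "('a hw \<times> 'a hw) filter" where
  "uniformity_hw = (INF e\<in>{0<..}. principal {(x, y). dist x y < e})"
definition open_hw :: "'a hw set \<Rightarrow> bool" where
  "open_hw U = (\<forall>x\<in>U. \<forall>\<^sub>F (x', y) in uniformity. x' = x \<longrightarrow> y \<in> U)"
instance
proof
  fix x y z :: "'a hw" and a b :: real
  show "x + y + z = x + (y + z)" by transfer (simp add: algebra_simps)
  show "x + y = y + x" by transfer (simp add: algebra_simps)
  show "0 + x = x" by transfer simp
  show "- x + x = 0" by transfer simp
  show "x - y = x + - y" by transfer simp
  show "a *\<^sub>R (x + y) = a *\<^sub>R x + a *\<^sub>R y" by transfer (simp add: scaleR_add_right)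
  show "(a + b) *\<^sub>R x = a *\<^sub>R x + b *\<^sub>R x" by transfer (simp add: scaleR_add_left)
  show "a *\<^sub>R b *\<^sub>R x = (a * b) *\<^sub>R x" by transfer simp
  show "1 *\<^sub>R x = x" by transfer simp
  show "dist x y = norm (x - y)" by transfer (simp add: dist_norm)
  show "sgn x = inverse (norm x) *\<^sub>R x" by transfer (simp add: sgn_div_norm)
  show "(norm x = 0) = (x = 0)" by transfer simp
  show "norm (x + y) \<le> norm x + norm y" by transfer (rule norm_triangle_ineq)
  show "norm (a *\<^sub>R x) = \<bar>a\<bar> * norm x" by transfer simp
qed (simp_all add: uniformity_hw_def open_hw_def)
end

instance hw :: ("{real_normed_vector,complete_space}") banach
proof
  fix X :: "nat \<Rightarrow> 'a hw"
  assume "Cauchy X"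
  then have "Cauchy (\<lambda>n. Rep_hw (X n))"
    unfolding Cauchy_def by (simp add: dist_hw.rep_eq)
  then obtain L where "(\<lambda>n. Rep_hw (X n)) \<longlonglongrightarrow> L" using Cauchy_convergent_iff convergent_def by blast
  then have "X \<longlonglongrightarrow> Abs_hw L"
    unfolding tendsto_iff by (simp add: dist_hw.rep_eq Abs_hw_inverse)
  then show "convergent X" by (auto simp: convergent_def)
qed

lemma ubp:
  fixes T :: "'i \<Rightarrow> ('a::banach \<Rightarrow>\<^sub>L 'b::real_normed_vector)"
  assumes bd: "\<And>x. \<exists>C. \<forall>i\<in>I. norm (T i x) \<le> C"
  shows "\<exists>M. \<forall>i\<in>I. norm (T i) \<le> M"
proof -
  define F where "F n = {x. \<forall>i\<in>I. norm (T i x) \<le> real n}" for n :: nat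
  have clF: "closed (F n)" for n
  proof -
    have "F n = (\<Inter>i\<in>I. {x. norm (T i x) \<le> real n})" by (auto simp: F_def)
    moreover have "closed {x. norm (T i x) \<le> real n}" for i
      by (intro closed_Collect_le continuous_intros)
    ultimately show ?thesis by auto
  qed
  have UF: "(\<Union>(range F)) = UNIV"
  proof (rule set_eqI, rule iffI)
    fix x :: 'a
    assume "x \<in> UNIV"
    obtain C where "\<forall>i\<in>I. norm (T i x) \<le> C" using bd by blast
    moreover obtain n :: nat where "C \<le> real n" using real_arch_simple by blast
    ultimately have "x \<in> F n" by (force simp: F_def)
    then show "x \<in> \<Union>(range F)" by blast
  qed simp
  have "\<exists>n. interior (F n) \<noteq> {}"
  proof (rule ccontr)
    assume "\<not> ?thesis"
    then have "euclidean interior_of \<Union>(range F) = {}"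
      by (intro Baire_category_alt) (auto simp: completely_metrizable_space_euclidean clF)
    then show False using UF by simp
  qed
  then obtain n x0 where "x0 \<in> interior (F n)" by blast
  then obtain r where r: "r > 0" "ball x0 r \<subseteq> F n"
    using open_contains_ball_eq open_interior interior_subset by (metis subset_trans)
  have "norm (T i) \<le> 4 * real n / r" if i: "i \<in> I" for i
  proof (rule norm_blinfun_bound)
    show "0 \<le> 4 * real n / r" using r by simp
    fix y :: 'a
    show "norm (T i y) \<le> 4 * real n / r * norm y"
    proof (cases "y = 0")
      case True then show ?thesis by simp
    next
      case False
      define z where "z = (r / 2 / norm y) *\<^sub>R y"
      have nz: "norm z = r/2" using False r by (simp add: z_def)
      have "x0 + z \<in> F n" "x0 \<in> F n" using r nz by (auto intro!: subsetD[OF r(2)] simp: dist_norm)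
      then have b1: "norm (T i (x0 + z)) \<le> real n" "norm (T i x0) \<le> real n" using i by (auto simp: F_def)
      have "norm (T i z) \<le> 2 * real n"
        using b1 norm_triangle_ineq4[of "T i (x0 + z)" "T i x0"] by (simp add: blinfun.add_right)
      moreover have "T i y = (2 * norm y / r) *\<^sub>R T i z" using False r
        by (simp add: z_def blinfun.scaleR_right)
      ultimately have "norm (T i y) \<le> (2 * norm y / r) * (2 * real n)" using r
      proof -
        have "norm (T i y) = (2 * norm y / r) * norm (T i z)" using r by (simp add: \<open>T i y = _\<close>)
        also have "\<dots> \<le> (2 * norm y / r) * (2 * real n)"
          by (rule mult_left_mono) (use r \<open>norm (T i z) \<le> _\<close> in auto)
        finally show ?thesis .
      qed
      then show ?thesis by (simp add: field_simps)
    qed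
  qed
  then show ?thesis by blast
qed

lemma ab3: "(a::'a::ab_group_add) = y + e + k \<Longrightarrow> a - e - k = y"
  by (simp add: algebra_simps)

lemma vd_quot:
  fixes F :: "real \<Rightarrow> 'a::real_normed_vector"
  assumes d: "(F has_vector_derivative v) (at u within {a..b})" and "a \<le> u" "u < b"
  shows "((\<lambda>h. (1/h) *\<^sub>R (F (u + h) - F u)) \<longlongrightarrow> v) (at_right 0)"
proof -
  have "(F has_vector_derivative v) (at u within {u..b})"
    by (rule has_vector_derivative_within_subset[OF d]) (use assms in auto)
  then have "(F has_vector_derivative v) (at_right u)"
    using at_within_Icc_at_right[OF \<open>u < b\<close>] by simp
  then have "((\<lambda>y. norm (F y - F u - (y - u) *\<^sub>R v) / norm (y - u)) \<longlongrightarrow> 0) (at_right u)"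
    by (simp add: has_vector_derivative_def has_derivative_iff_norm)
  moreover have "\<forall>\<^sub>F y in at_right u. norm (F y - F u - (y - u) *\<^sub>R v) / norm (y - u)
      = norm ((1/(y - u)) *\<^sub>R (F y - F u) - v)"
  proof (rule eventually_mono[OF eventually_at_right_less])
    fix y assume "u < y"
    then have "(1/(y - u)) *\<^sub>R ((y - u) *\<^sub>R v) = v" by simp
    then have "(1/(y - u)) *\<^sub>R (F y - F u) - v = (1/(y - u)) *\<^sub>R (F y - F u - (y - u) *\<^sub>R v)"
      by (simp only: scaleR_diff_right)
    then show "norm (F y - F u - (y - u) *\<^sub>R v) / norm (y - u) = norm ((1/(y - u)) *\<^sub>R (F y - F u) - v)"
      using \<open>u < y\<close> by (simp add: divide_inverse mult.commute)
  qed
  ultimately have "((\<lambda>y. norm ((1/(y - u)) *\<^sub>R (F y - F u) - v)) \<longlongrightarrow> 0) (at_right u)"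
    using tendsto_cong by fastforce
  then have "((\<lambda>y. (1/(y - u)) *\<^sub>R (F y - F u)) \<longlongrightarrow> v) (at_right u)"
    using tendsto_norm_zero_iff LIM_zero_cancel by blast
  then show ?thesis
    by (subst (asm) filterlim_at_right_to_0) (simp add: add.commute)
qed

locale c0g0 =
  fixes G :: "real \<Rightarrow> ('a::real_normed_vector \<Rightarrow>\<^sub>L 'a)" and D :: "'a set" and A :: "'a \<Rightarrow> 'a"
  assumes grp: "c0_group G" and gen: "is_generator G D A"
begin

lemma G0: "G 0 = id_blinfun" using grp by (simp add: c0_group_def)
lemma G0x[simp]: "G 0 x = x" by (simp add: G0)
lemma Gadd: "G (s + t) = G s o\<^sub>L G t" using grp by (simp add: c0_group_def)
lemma Gapp: "G s (G t x) = G (s + t) x" by (simp add: Gadd)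
lemma Gcont: "continuous_on UNIV (\<lambda>t. G t x)" using grp by (simp add: c0_group_def)
lemma Gtendsto: "((\<lambda>t. G t x) \<longlongrightarrow> G t0 x) (at t0 within S)"
  using Gcont[of x] by (meson UNIV_I continuous_on_def tendsto_within_subset subset_UNIV)

lemma genD: "x \<in> D \<Longrightarrow> ((\<lambda>h. (1/h) *\<^sub>R (G h x - x)) \<longlongrightarrow> A x) (at_right 0)"
  using gen by (simp add: is_generator_def)

lemma genI:
  assumes "((\<lambda>h. (1/h) *\<^sub>R (G h x - x)) \<longlongrightarrow> y) (at_right 0)"
  shows "x \<in> D" "A x = y"
proof -
  show xD: "x \<in> D" using gen assms by (auto simp: is_generator_def)
  show "A x = y" using tendsto_unique[OF _ genD[OF xD] assms] by simp
qed

lemma D_add: assumes "x \<in> D" "y \<in> D" shows "x + y \<in> D" "A (x + y) = A x + A y"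
proof -
  have "((\<lambda>h. (1/h) *\<^sub>R (G h x - x) + (1/h) *\<^sub>R (G h y - y)) \<longlongrightarrow> A x + A y) (at_right 0)"
    by (intro tendsto_add genD assms)
  then have "((\<lambda>h. (1/h) *\<^sub>R (G h (x + y) - (x + y))) \<longlongrightarrow> A x + A y) (at_right 0)"
    by (simp add: blinfun.add_right algebra_simps scaleR_add_right)
  then show "x + y \<in> D" "A (x + y) = A x + A y" using genI by blast+
qed

lemma D_scale: assumes "x \<in> D" shows "c *\<^sub>R x \<in> D" "A (c *\<^sub>R x) = c *\<^sub>R A x"
proof -
  have "((\<lambda>h. c *\<^sub>R ((1/h) *\<^sub>R (G h x - x))) \<longlongrightarrow> c *\<^sub>R A x) (at_right 0)"
    by (intro tendsto_scaleR tendsto_const genD assms)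
  then have "((\<lambda>h. (1/h) *\<^sub>R (G h (c *\<^sub>R x) - c *\<^sub>R x)) \<longlongrightarrow> c *\<^sub>R A x) (at_right 0)"
    by (simp add: blinfun.scaleR_right algebra_simps scaleR_diff_right)
  then show "c *\<^sub>R x \<in> D" "A (c *\<^sub>R x) = c *\<^sub>R A x" using genI by blast+
qed

lemma D_diff: assumes "x \<in> D" "y \<in> D" shows "x - y \<in> D" "A (x - y) = A x - A y"
  using D_add[OF assms(1) D_scale(1)[OF assms(2), of "-1"]] D_scale(2)[OF assms(2), of "-1"] by auto

end

locale c0g = c0g0 G D A for G :: "real \<Rightarrow> ('a::banach \<Rightarrow>\<^sub>L 'a)" and D A
begin

lemma Gbound: "\<exists>M. \<forall>t\<in>{a..b}. norm (G t) \<le> M"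
proof (rule ubp)
  fix x
  have "compact ((\<lambda>t. G t x) ` {a..b})"
    by (rule compact_continuous_image[OF continuous_on_subset[OF Gcont subset_UNIV]]) simp
  then have "bounded ((\<lambda>t. G t x) ` {a..b})" by (rule compact_imp_bounded)
  then show "\<exists>C. \<forall>t\<in>{a..b}. norm (G t x) \<le> C"
    unfolding bounded_iff by auto
qed


lemma key:
  fixes lam t :: real and x :: 'a
  assumes t: "t > 0"
  defines "F \<equiv> \<lambda>u. integral {0..u} (\<lambda>s. exp (- lam * s) *\<^sub>R G s x)"
  shows "F t \<in> D" "A (F t) = lam *\<^sub>R F t - x + exp (- lam * t) *\<^sub>R G t x"
proof -
  define f where "f = (\<lambda>s. exp (- lam * s) *\<^sub>R G s x)"
  have Ff: "F = (\<lambda>u. integral {0..u} f)" by (simp add: F_def f_def)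
  have fc: "continuous_on UNIV f" unfolding f_def by (intro continuous_intros Gcont)
  have fint: "f integrable_on {a..b}" for a b
    by (rule integrable_continuous_real[OF continuous_on_subset[OF fc subset_UNIV]])
  have dq: "((\<lambda>h. (1/h) *\<^sub>R (F (u + h) - F u)) \<longlongrightarrow> f u) (at_right 0)" if "u \<ge> 0" for u
    unfolding Ff
    by (rule vd_quot[OF integral_has_vector_derivative[OF continuous_on_subset[OF fc subset_UNIV], of u 0 "u+1"]])
       (use that in auto)
  have F0: "F 0 = 0" by (simp add: Ff)
  have f0: "f 0 = x" by (simp add: f_def)
  have shift: "G h (F t) = exp (lam * h) *\<^sub>R (F (t + h) - F h)" if h: "h \<ge> 0" for h
  proof -
    have "G h (F t) = integral {0..t} (blinfun_apply (G h) \<circ> f)"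
      unfolding Ff by (rule integral_linear[OF fint blinfun.bounded_linear_right, symmetric])
    also have "(blinfun_apply (G h) \<circ> f) = (\<lambda>s. exp (lam * h) *\<^sub>R (f \<circ> (+) h) s)"
    proof
      fix s
      have "exp (lam * h) * exp (- lam * (h + s)) = exp (- lam * s)"
        by (subst exp_add[symmetric]) (simp add: algebra_simps)
      then show "(blinfun_apply (G h) \<circ> f) s = exp (lam * h) *\<^sub>R (f \<circ> (+) h) s"
        by (simp add: f_def blinfun.scaleR_right Gapp)
    qed
    also have "integral {0..t} (\<lambda>s. exp (lam * h) *\<^sub>R (f \<circ> (+) h) s)
        = exp (lam * h) *\<^sub>R integral {0..t} (f \<circ> (+) h)"
    proof -
      have "continuous_on {0..t} (\<lambda>s. f (h + s))"
        by (rule continuous_on_compose2[OF fc]) (auto intro!: continuous_intros)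
      then have gint: "(f \<circ> (+) h) integrable_on {0..t}"
        by (simp add: comp_def integrable_continuous_real)
      show ?thesis using integral_linear[OF gint bounded_linear_scaleR_right, of "exp (lam * h)"]
        by (simp add: comp_def)
    qed
    also have "integral {0..t} (f \<circ> (+) h) = integral {h..t+h} f"
      using integral_shift_Icc_real[of 0 t f h] by simp
    also have "integral {h..t+h} f = F (t + h) - F h"
      using Henstock_Kurzweil_Integration.integral_combine[where a=0 and c=h and b="t+h" and f=f] fint h t unfolding Ff by (simp add: algebra_simps)
    finally show ?thesis .
  qed
  have q: "(1/h) *\<^sub>R (G h (F t) - F t) = ((exp (lam * h) - 1) / h) *\<^sub>R (F (t + h) - F (0 + h))
      + ((1/h) *\<^sub>R (F (t + h) - F t) - (1/h) *\<^sub>R (F (0 + h) - F 0))" if "h > 0" for h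
  proof -
    define E a b c where "E = exp (lam * h)" and "a = F (t + h)" and "b = F h" and "c = F t"
    have "((E - 1) / h) *\<^sub>R (a - b) + ((1/h) *\<^sub>R (a - c) - (1/h) *\<^sub>R (b - 0))
        = (1/h) *\<^sub>R ((E - 1) *\<^sub>R (a - b) + ((a - c) - b))"
      by (simp add: scaleR_add_right scaleR_diff_right)
    also have "(E - 1) *\<^sub>R (a - b) + ((a - c) - b) = E *\<^sub>R (a - b) - c"
      by (simp add: algebra_simps)
    finally show ?thesis using shift[of h] that F0 by (simp add: E_def a_def b_def c_def)
  qed
  have L1: "((\<lambda>h. (exp (lam * h) - 1) / h) \<longlongrightarrow> lam) (at_right 0)"
  proof -
    have "((\<lambda>h. exp (lam * h)) has_field_derivative lam) (at 0)"
      by (auto intro!: derivative_eq_intros)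
    then have "((\<lambda>h. (exp (lam * h) - exp (lam * 0)) / (h - 0)) \<longlongrightarrow> lam) (at 0)"
      by (simp add: has_field_derivative_iff)
    then show ?thesis by (simp add: filterlim_at_split)
  qed
  have cont: "((\<lambda>h. F (u + h)) \<longlongrightarrow> F u) (at_right 0)" if "u \<ge> 0" for u
  proof -
    have "((\<lambda>h. F u + h *\<^sub>R ((1/h) *\<^sub>R (F (u + h) - F u))) \<longlongrightarrow> F u + 0 *\<^sub>R f u) (at_right 0)"
      by (intro tendsto_intros dq that)
    moreover have "\<forall>\<^sub>F h in at_right 0. F u + h *\<^sub>R ((1/h) *\<^sub>R (F (u + h) - F u)) = F (u + h)"
      by (rule eventually_mono[OF eventually_at_right_less]) simp
    ultimately show ?thesis using tendsto_cong by fastforce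
  qed
  have lim0: "((\<lambda>h. ((exp (lam * h) - 1) / h) *\<^sub>R (F (t + h) - F (0 + h))
      + ((1/h) *\<^sub>R (F (t + h) - F t) - (1/h) *\<^sub>R (F (0 + h) - F 0))) \<longlongrightarrow>
      lam *\<^sub>R (F t - F 0) + (f t - f 0)) (at_right 0)"
    using t by (intro tendsto_add tendsto_scaleR L1 tendsto_diff cont dq) auto
  have ev: "\<forall>\<^sub>F h in at_right 0. ((exp (lam * h) - 1) / h) *\<^sub>R (F (t + h) - F (0 + h))
      + ((1/h) *\<^sub>R (F (t + h) - F t) - (1/h) *\<^sub>R (F (0 + h) - F 0)) = (1/h) *\<^sub>R (G h (F t) - F t)"
    by (rule eventually_mono[OF eventually_at_right_less]) (simp add: q)
  have lv: "lam *\<^sub>R (F t - F 0) + (f t - f 0) = lam *\<^sub>R F t - x + exp (- lam * t) *\<^sub>R G t x"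
    by (simp add: F0 f0) (simp add: f_def)
  have lim: "((\<lambda>h. (1/h) *\<^sub>R (G h (F t) - F t)) \<longlongrightarrow> lam *\<^sub>R F t - x + exp (- lam * t) *\<^sub>R G t x) (at_right 0)"
    using Lim_transform_eventually[OF lim0 ev] unfolding lv .
  show "F t \<in> D" "A (F t) = lam *\<^sub>R F t - x + exp (- lam * t) *\<^sub>R G t x"
    using genI[OF lim] by auto
qed

lemma dense: "closure D = UNIV"
proof -
  have "x \<in> closure D" for x
  proof -
    define F where "F = (\<lambda>u. integral {0..u} (\<lambda>s. exp (- 0 * s) *\<^sub>R G s x))"
    have Fe: "F = (\<lambda>u. integral {0..u} (\<lambda>s. G s x))" by (simp add: F_def)
    have fc: "continuous_on UNIV (\<lambda>s. G s x)" by (rule Gcont)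
    have "((\<lambda>h. (1/h) *\<^sub>R (F (0 + h) - F 0)) \<longlongrightarrow> G 0 x) (at_right 0)"
      unfolding Fe
      by (rule vd_quot[OF integral_has_vector_derivative[OF continuous_on_subset[OF fc subset_UNIV], of 0 0 1]]) auto
    then have lim: "((\<lambda>h. (1/h) *\<^sub>R F h) \<longlongrightarrow> x) (at_right 0)" by (simp add: Fe)
    have ev: "\<forall>\<^sub>F h in at_right 0. (1/h) *\<^sub>R F h \<in> closure D"
    proof (rule eventually_mono[OF eventually_at_right_less])
      fix h :: real assume "0 < h"
      then have "F h \<in> D" using key(1)[of h 0 x] by (simp add: F_def)
      then show "(1/h) *\<^sub>R F h \<in> closure D" using D_scale(1) closure_subset by blast
    qed
    show ?thesis by (rule Lim_in_closed_set[OF closed_closure ev _ lim]) simp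
  qed
  then show ?thesis by auto
qed

lemma surj: fixes K :: "'a \<Rightarrow>\<^sub>L 'a" shows "\<exists>l0. \<forall>l\<ge>l0. \<forall>y. \<exists>x\<in>D. l *\<^sub>R x - A x - K x = y"
proof -
  obtain M0 where M0: "\<forall>t\<in>{0..1}. norm (G t) \<le> M0" using Gbound by blast
  define M where "M = max M0 1"
  have Mpos: "M > 0" by (simp add: M_def)
  have M: "\<And>t. t \<in> {0..1} \<Longrightarrow> norm (G t) \<le> M" using M0 unfolding M_def by (meson max.coboundedI1)
  define t where "t = min 1 (1 / (4 * (norm K + 1) * M))"
  have cpos: "(4 * (norm K + 1) * M) > 0" using Mpos by (intro mult_pos_pos) (auto intro: add_nonneg_pos)
  then have t0: "t > 0" "t \<le> 1" by (auto simp: t_def)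
  have tK: "norm K * (M * t) \<le> 1/4"
  proof -
    have "t \<le> 1 / (4 * (norm K + 1) * M)" by (simp add: t_def)
    then have "(4 * (norm K + 1) * M) * t \<le> 1" using cpos
      by (simp add: le_divide_eq mult.commute)
    then have "(norm K + 1) * M * t \<le> 1/4" by (simp add: algebra_simps)
    moreover have "norm K * (M * t) \<le> (norm K + 1) * M * t" using Mpos t0 by (simp add: algebra_simps)
    ultimately show ?thesis by linarith
  qed
  define l0 where "l0 = max 0 (ln (4 * M) / t)"
  have "\<forall>y. \<exists>x\<in>D. l *\<^sub>R x - A x - K x = y" if l: "l \<ge> l0" for l
  proof
    fix y
    have l0': "l \<ge> 0" "l \<ge> ln (4 * M) / t" using l by (auto simp: l0_def)
    have ex: "exp (- l * t) * M \<le> 1/4"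
    proof -
      have "ln (4 * M) \<le> l * t" using l0' t0 by (simp add: field_simps)
      then have "4 * M \<le> exp (l * t)" using Mpos by (metis exp_ln exp_le_cancel_iff mult_pos_pos zero_less_numeral)
      then show ?thesis by (simp add: exp_minus field_simps)
    qed
    define J where "J = (\<lambda>v. integral {0..t} (\<lambda>s. exp (- l * s) *\<^sub>R G s v))"
    have jint: "(\<lambda>s. exp (- l * s) *\<^sub>R G s v) integrable_on {0..t}" for v
      by (rule integrable_continuous_real) (intro continuous_intros continuous_on_subset[OF Gcont subset_UNIV])
    have Jdiff: "J v - J w = J (v - w)" for v w
      unfolding J_def using integral_diff[OF jint jint, of v w]
      by (simp add: blinfun.diff_right scaleR_diff_right)
    have Jb: "norm (J v) \<le> M * norm v * t" for v
    proof -
      have bd: "norm (exp (- l * s) *\<^sub>R G s v) \<le> M * norm v" if s: "s \<in> {0..t} - {}" for s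
      proof -
        have "exp (- l * s) \<le> 1" using s l0' by simp
        moreover have "norm (G s v) \<le> M * norm v"
        proof -
          have "norm (G s) \<le> M" using M[of s] s t0 by auto
          then have "norm (G s) * norm v \<le> M * norm v" by (simp add: mult_right_mono)
          then show ?thesis using norm_blinfun[of "G s" v] by linarith
        qed
        ultimately show ?thesis
          by (simp add: mult_le_one mult_mono' order_trans[OF mult_left_le_one_le])
      qed
      have "0 \<le> M * norm v" using Mpos by simp
      from has_integral_bound_real[OF this finite.emptyI integrable_integral[OF jint] bd]
      show ?thesis using t0 by (simp add: J_def)
    qed
    define \<Phi> where "\<Phi> = (\<lambda>v. y + exp (- l * t) *\<^sub>R G t v + K (J v))"
    have "\<exists>!v. \<Phi> v = v"
    proof (rule banach_fix_type[of "1/2"])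
      show "\<forall>v w. dist (\<Phi> v) (\<Phi> w) \<le> 1/2 * dist v w"
      proof (intro allI)
        fix v w
        have "\<Phi> v - \<Phi> w = exp (- l * t) *\<^sub>R G t (v - w) + K (J (v - w))"
          by (simp add: \<Phi>_def Jdiff[symmetric] blinfun.diff_right scaleR_diff_right)
        then have "dist (\<Phi> v) (\<Phi> w) \<le> norm (exp (- l * t) *\<^sub>R G t (v - w)) + norm (K (J (v - w)))"
          unfolding dist_norm by (metis norm_triangle_ineq)
        also have "norm (exp (- l * t) *\<^sub>R G t (v - w)) \<le> exp (- l * t) * (M * norm (v - w))"
          using M[of t] t0 norm_blinfun[of "G t" "v - w"]
          by (simp add: mult_left_mono order_trans[OF _ mult_right_mono])
        also have "norm (K (J (v - w))) \<le> norm K * (M * norm (v - w) * t)"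
          using norm_blinfun[of K "J (v - w)"] Jb[of "v - w"] by (meson mult_left_mono norm_ge_zero order_trans)
        also have "exp (- l * t) * (M * norm (v - w)) + norm K * (M * norm (v - w) * t)
            = (exp (- l * t) * M + norm K * (M * t)) * norm (v - w)" by (simp add: algebra_simps)
        also have "\<dots> \<le> 1/2 * norm (v - w)"
          using ex tK by (intro mult_right_mono) auto
        finally show "dist (\<Phi> v) (\<Phi> w) \<le> 1/2 * dist v w" by (simp add: dist_norm)
      qed
    qed auto
    then obtain v where v: "\<Phi> v = v" by blast
    have "J v \<in> D" "A (J v) = l *\<^sub>R J v - v + exp (- l * t) *\<^sub>R G t v"
      using key[OF t0(1), of l v] by (simp_all add: J_def)
    moreover have "l *\<^sub>R J v - A (J v) - K (J v) = y"
    proof -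
      have "l *\<^sub>R J v - A (J v) - K (J v) = v - exp (- l * t) *\<^sub>R G t v - K (J v)"
        by (simp add: calculation(2))
      also have "\<dots> = y"
        by (rule ab3[OF v[unfolded \<Phi>_def, symmetric]])
      finally show ?thesis .
    qed
    ultimately show "\<exists>x\<in>D. l *\<^sub>R x - A x - K x = y" by blast
  qed
  then show ?thesis by blast
qed

lemma Gtend_comp:
  assumes s: "(s \<longlongrightarrow> 0) F" and g: "(g \<longlongrightarrow> y) F"
  shows "((\<lambda>h. G (s h) (g h)) \<longlongrightarrow> y) F"
proof -
  obtain M where M: "\<forall>t\<in>{-1..1}. norm (G t) \<le> M" using Gbound by blast
  have sev: "\<forall>\<^sub>F h in F. s h \<in> {-1..1}"
  proof -
    have "\<forall>\<^sub>F h in F. -1 < s h" by (rule order_tendstoD(1)[OF s]) simp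
    moreover have "\<forall>\<^sub>F h in F. s h < 1" by (rule order_tendstoD(2)[OF s]) simp
    ultimately show ?thesis by eventually_elim auto
  qed
  have "isCont (\<lambda>t. G t y) 0"
    using Gcont[of y] by (simp add: continuous_on_eq_continuous_at)
  then have 1: "((\<lambda>h. G (s h) y) \<longlongrightarrow> y) F"
    using isCont_tendsto_compose[OF _ s, of "\<lambda>t. G t y"] by simp
  have gy: "((\<lambda>h. M * norm (g h - y)) \<longlongrightarrow> M * 0) F"
    by (rule tendsto_mult[OF tendsto_const tendsto_norm_zero[OF LIM_zero[OF g]]])
  have 2: "((\<lambda>h. G (s h) (g h - y)) \<longlongrightarrow> 0) F"
  proof (rule Lim_null_comparison[OF _ gy[simplified]])
    show "\<forall>\<^sub>F h in F. norm (G (s h) (g h - y)) \<le> M * norm (g h - y)"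
      using sev
    proof eventually_elim
      case (elim h)
      then have "norm (G (s h)) \<le> M" using M by auto
      then have "norm (G (s h)) * norm (g h - y) \<le> M * norm (g h - y)" by (simp add: mult_right_mono)
      then show ?case using norm_blinfun[of "G (s h)" "g h - y"] by linarith
    qed
  qed
  have "((\<lambda>h. G (s h) (g h - y) + G (s h) y) \<longlongrightarrow> 0 + y) F"
    by (intro tendsto_add 1 2)
  then show ?thesis by (simp add: blinfun.diff_right)
qed

lemma rev: "c0g (\<lambda>t. G (-t)) D (\<lambda>x. - A x)"
proof unfold_locales
  show "c0_group (\<lambda>t. G (- t))"
    unfolding c0_group_def
  proof (intro conjI allI)
    show "G (- 0) = id_blinfun" by (simp add: G0)
    fix s t show "G (- (s + t)) = G (- s) o\<^sub>L G (- t)" using Gadd[of "-s" "-t"] by simp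
  next
    fix x show "continuous_on UNIV (\<lambda>t. G (- t) x)"
      by (rule continuous_on_compose2[OF Gcont[of x]]) (auto intro!: continuous_intros)
  qed
  define q where "q x h = (1/h) *\<^sub>R (G h x - x)" for x h
  define r where "r x h = (1/h) *\<^sub>R (G (-h) x - x)" for x h
  have rq: "r x h = - G (-h) (q x h)" for x h
  proof -
    have "G (-h) (q x h) = (1/h) *\<^sub>R (x - G (-h) x)"
      by (simp add: q_def blinfun.scaleR_right blinfun.diff_right Gapp)
    moreover have "r x h = - ((1/h) *\<^sub>R (x - G (-h) x))"
      unfolding r_def by (metis minus_diff_eq scaleR_minus_right)
    ultimately show ?thesis by simp
  qed
  have qr: "q x h = - G h (r x h)" for x h
  proof -
    have "G h (r x h) = (1/h) *\<^sub>R (x - G h x)"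
      by (simp add: r_def blinfun.scaleR_right blinfun.diff_right Gapp)
    moreover have "q x h = - ((1/h) *\<^sub>R (x - G h x))"
      unfolding q_def by (metis minus_diff_eq scaleR_minus_right)
    ultimately show ?thesis by simp
  qed
  have id0: "((\<lambda>h::real. h) \<longlongrightarrow> 0) (at_right 0)" "((\<lambda>h::real. - h) \<longlongrightarrow> 0) (at_right 0)"
    by (auto intro!: tendsto_eq_intros)
  have r2q: "(q x \<longlongrightarrow> - y) (at_right 0)" if "(r x \<longlongrightarrow> y) (at_right 0)" for x y
  proof -
    have "((\<lambda>h. - G h (r x h)) \<longlongrightarrow> - y) (at_right 0)"
      by (intro tendsto_minus Gtend_comp[OF id0(1) that])
    moreover have "(\<lambda>h. - G h (r x h)) = q x" using qr by auto
    ultimately show ?thesis by simp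
  qed
  have q2r: "(r x \<longlongrightarrow> - y) (at_right 0)" if "(q x \<longlongrightarrow> y) (at_right 0)" for x y
  proof -
    have "((\<lambda>h. - G (-h) (q x h)) \<longlongrightarrow> - y) (at_right 0)"
      by (intro tendsto_minus Gtend_comp[OF id0(2) that])
    moreover have "(\<lambda>h. - G (-h) (q x h)) = r x" using rq by auto
    ultimately show ?thesis by simp
  qed
  show "is_generator (\<lambda>t. G (- t)) D (\<lambda>x. - A x)"
    unfolding is_generator_def
  proof (intro conjI ballI)
    show "D = {x. \<exists>y. ((\<lambda>h. (1 / h) *\<^sub>R (G (- h) x - x)) \<longlongrightarrow> y) (at_right 0)}"
    proof (intro set_eqI iffI)
      fix x assume "x \<in> D"
      have "(q x \<longlongrightarrow> A x) (at_right 0)" using genD[OF \<open>x \<in> D\<close>] by (simp add: q_def[abs_def])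
      from q2r[OF this] show "x \<in> {x. \<exists>y. ((\<lambda>h. (1 / h) *\<^sub>R (G (- h) x - x)) \<longlongrightarrow> y) (at_right 0)}"
        by (auto simp: r_def[abs_def])
    next
      fix x assume "x \<in> {x. \<exists>y. ((\<lambda>h. (1 / h) *\<^sub>R (G (- h) x - x)) \<longlongrightarrow> y) (at_right 0)}"
      then obtain y where "(r x \<longlongrightarrow> y) (at_right 0)" by (auto simp: r_def[abs_def])
      from r2q[OF this] show "x \<in> D" using genI(1)[of x "-y"] by (simp add: q_def[abs_def])
    qed
  next
    fix x assume "x \<in> D"
    have "(q x \<longlongrightarrow> A x) (at_right 0)" using genD[OF \<open>x \<in> D\<close>] by (simp add: q_def[abs_def])
    from q2r[OF this] show "((\<lambda>h. (1 / h) *\<^sub>R (G (- h) x - x)) \<longlongrightarrow> - A x) (at_right 0)"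
      by (simp add: r_def[abs_def])
  qed
qed

end

lemma c0g_facts:
  fixes G :: "real \<Rightarrow> ('a::banach \<Rightarrow>\<^sub>L 'a)"
  assumes "c0_group G" "is_generator G D A"
  shows "closure D = UNIV"
    "\<And>K::'a \<Rightarrow>\<^sub>L 'a. \<exists>l0. \<forall>l\<ge>l0. \<forall>y. \<exists>x\<in>D. l *\<^sub>R x - A x - K x = y"
    "\<And>K::'a \<Rightarrow>\<^sub>L 'a. \<exists>l0. \<forall>l\<ge>l0. \<forall>y. \<exists>x\<in>D. l *\<^sub>R x + A x - K x = y"
proof -
  interpret c0g G D A by unfold_locales (rule assms)+
  show "closure D = UNIV" by (rule dense)
  show "\<exists>l0. \<forall>l\<ge>l0. \<forall>y. \<exists>x\<in>D. l *\<^sub>R x - A x - K x = y" for K :: "'a \<Rightarrow>\<^sub>L 'a" by (rule surj)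
  interpret r: c0g "\<lambda>t. G (-t)" D "\<lambda>x. - A x" by (rule rev)
  show "\<exists>l0. \<forall>l\<ge>l0. \<forall>y. \<exists>x\<in>D. l *\<^sub>R x + A x - K x = y" for K :: "'a \<Rightarrow>\<^sub>L 'a"
    using r.surj[of K] by simp
qed

lemma hw_eq: "x = y \<longleftrightarrow> Rep_hw x = Rep_hw y" by (simp add: Rep_hw_inject)
lemma RA[simp]: "Rep_hw (Abs_hw x) = x" by (simp add: Abs_hw_inverse)
lemma AR[simp]: "Abs_hw (Rep_hw x) = x" by (simp add: Rep_hw_inverse)
lemma Abs_add: "Abs_hw (x + y) = Abs_hw x + Abs_hw y" by (simp add: hw_eq plus_hw.rep_eq)
lemma Abs_diff: "Abs_hw (x - y) = Abs_hw x - Abs_hw y" by (simp add: hw_eq minus_hw.rep_eq)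
lemma Abs_scale: "Abs_hw (c *\<^sub>R x) = c *\<^sub>R Abs_hw x" by (simp add: hw_eq scaleR_hw.rep_eq)
lemma Abs_norm: "norm (Abs_hw x) = norm x" by (simp add: norm_hw.rep_eq)
lemma Abs_dist: "dist (Abs_hw x) (Abs_hw y) = dist x y" by (simp add: dist_hw.rep_eq)
lemma Rep_dist: "dist (Rep_hw x) (Rep_hw y) = dist x y" by (simp add: dist_hw.rep_eq)
lemma Rep_add: "Rep_hw (x + y) = Rep_hw x + Rep_hw y" by (simp add: plus_hw.rep_eq)
lemma Rep_diff: "Rep_hw (x - y) = Rep_hw x - Rep_hw y" by (simp add: minus_hw.rep_eq)
lemma Rep_scale: "Rep_hw (c *\<^sub>R x) = c *\<^sub>R Rep_hw x" by (simp add: scaleR_hw.rep_eq)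
lemma Rep_norm: "norm (Rep_hw x) = norm x" by (simp add: norm_hw.rep_eq)
lemma Rep_zero: "Rep_hw 0 = 0" by (simp add: zero_hw.rep_eq)

lemma bl_Abs: "bounded_linear (Abs_hw :: 'a::real_normed_vector \<Rightarrow> 'a hw)"
  by (rule bounded_linear_intro[of _ 1]) (simp_all add: Abs_add Abs_scale Abs_norm)
lemma bl_Rep: "bounded_linear (Rep_hw :: 'a::real_normed_vector hw \<Rightarrow> 'a)"
  by (rule bounded_linear_intro[of _ 1]) (simp_all add: Rep_add Rep_scale Rep_norm)

lemma bl_conj: "bounded_linear (\<lambda>v. Abs_hw (blinfun_apply (T::'a::real_normed_vector \<Rightarrow>\<^sub>L 'a) (Rep_hw v)))"
  using bounded_linear_compose[OF bl_Abs bounded_linear_compose[OF blinfun.bounded_linear_right[of T] bl_Rep]]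
  by (simp add: o_def)

definition conjw :: "('a::real_normed_vector \<Rightarrow>\<^sub>L 'a) \<Rightarrow> ('a hw \<Rightarrow>\<^sub>L 'a hw)" where
  "conjw T = Blinfun (\<lambda>v. Abs_hw (T (Rep_hw v)))"

lemma conjw_apply[simp]: "blinfun_apply (conjw T) v = Abs_hw (T (Rep_hw v))"
  unfolding conjw_def using bl_conj[of T] by (simp add: bounded_linear_Blinfun_apply)

lemma tendsto_Abs_iff: "((\<lambda>h. Abs_hw (f h)) \<longlongrightarrow> Abs_hw l) F \<longleftrightarrow> (f \<longlongrightarrow> l) F"
  unfolding tendsto_iff by (simp add: Abs_dist)

lemma c0g_facts_gen:
  fixes G :: "real \<Rightarrow> ('a::{real_normed_vector,complete_space} \<Rightarrow>\<^sub>L 'a)"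
  assumes grp: "c0_group G" and gen: "is_generator G D A"
  shows "closure D = UNIV"
    "\<And>K::'a \<Rightarrow>\<^sub>L 'a. \<exists>l0. \<forall>l\<ge>l0. \<forall>y. \<exists>x\<in>D. l *\<^sub>R x - A x - K x = y"
    "\<And>K::'a \<Rightarrow>\<^sub>L 'a. \<exists>l0. \<forall>l\<ge>l0. \<forall>y. \<exists>x\<in>D. l *\<^sub>R x + A x - K x = y"
proof -
  define Gw where "Gw t = conjw (G t)" for t
  define Dw where "Dw = Abs_hw ` D"
  define Aw where "Aw v = Abs_hw (A (Rep_hw v))" for v
  have inDw: "v \<in> Dw \<longleftrightarrow> Rep_hw v \<in> D" for v
    unfolding Dw_def by (metis AR RA image_iff)
  have gw: "c0_group Gw"
    unfolding c0_group_def
  proof (intro conjI allI)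
    show "Gw 0 = id_blinfun" using grp by (auto intro!: blinfun_eqI simp: c0_group_def Gw_def)
    fix s t show "Gw (s + t) = Gw s o\<^sub>L Gw t" using grp by (auto intro!: blinfun_eqI simp: c0_group_def Gw_def)
  next
    fix v
    have "continuous_on UNIV (\<lambda>t. G t (Rep_hw v))" using grp by (simp add: c0_group_def)
    then have "continuous_on UNIV (Abs_hw \<circ> (\<lambda>t. G t (Rep_hw v)))"
      by (rule continuous_on_compose) (simp add: linear_continuous_on bl_Abs)
    then show "continuous_on UNIV (\<lambda>t. Gw t v)" by (simp add: Gw_def o_def)
  qed
  have qeq: "(1/h) *\<^sub>R (Gw h v - v) = Abs_hw ((1/h) *\<^sub>R (G h (Rep_hw v) - Rep_hw v))" for h v
    by (simp add: Gw_def Abs_scale Abs_diff)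
  have qiff: "(((\<lambda>h. (1/h) *\<^sub>R (Gw h v - v)) \<longlongrightarrow> Abs_hw y) (at_right 0)) \<longleftrightarrow>
      (((\<lambda>h. (1/h) *\<^sub>R (G h (Rep_hw v) - Rep_hw v)) \<longlongrightarrow> y) (at_right 0))" for v y
    unfolding qeq by (rule tendsto_Abs_iff)
  have gg: "is_generator Gw Dw Aw"
    unfolding is_generator_def
  proof (intro conjI ballI)
    show "Dw = {x. \<exists>y. ((\<lambda>h. (1 / h) *\<^sub>R (Gw h x - x)) \<longlongrightarrow> y) (at_right 0)}"
    proof (intro set_eqI iffI)
      fix v assume "v \<in> Dw"
      then have "Rep_hw v \<in> D" by (simp add: inDw)
      then have "((\<lambda>h. (1/h) *\<^sub>R (G h (Rep_hw v) - Rep_hw v)) \<longlongrightarrow> A (Rep_hw v)) (at_right 0)"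
        using gen by (simp add: is_generator_def)
      then have "((\<lambda>h. (1 / h) *\<^sub>R (Gw h v - v)) \<longlongrightarrow> Abs_hw (A (Rep_hw v))) (at_right 0)"
        using qiff[of v "A (Rep_hw v)"] by simp
      then show "v \<in> {x. \<exists>y. ((\<lambda>h. (1 / h) *\<^sub>R (Gw h x - x)) \<longlongrightarrow> y) (at_right 0)}"
        by blast
    next
      fix v assume "v \<in> {x. \<exists>y. ((\<lambda>h. (1 / h) *\<^sub>R (Gw h x - x)) \<longlongrightarrow> y) (at_right 0)}"
      then obtain y where "((\<lambda>h. (1 / h) *\<^sub>R (Gw h v - v)) \<longlongrightarrow> Abs_hw (Rep_hw y)) (at_right 0)" by auto
      then have "((\<lambda>h. (1/h) *\<^sub>R (G h (Rep_hw v) - Rep_hw v)) \<longlongrightarrow> Rep_hw y) (at_right 0)"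
        using qiff[of v "Rep_hw y"] by simp
      then have "Rep_hw v \<in> D" using gen unfolding is_generator_def by blast
      then show "v \<in> Dw" by (simp add: inDw)
    qed
  next
    fix v assume "v \<in> Dw"
    then have "Rep_hw v \<in> D" by (simp add: inDw)
    then have "((\<lambda>h. (1/h) *\<^sub>R (G h (Rep_hw v) - Rep_hw v)) \<longlongrightarrow> A (Rep_hw v)) (at_right 0)"
      using gen by (simp add: is_generator_def)
    then show "((\<lambda>h. (1 / h) *\<^sub>R (Gw h v - v)) \<longlongrightarrow> Aw v) (at_right 0)"
      unfolding Aw_def using qiff[of v "A (Rep_hw v)"] by simp
  qed
  note F = c0g_facts[OF gw gg]
  show "closure D = UNIV"
  proof -
    have "x \<in> closure D" for x
      unfolding closure_approachable
    proof (intro allI impI)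
      fix e :: real assume "e > 0"
      have "Abs_hw x \<in> closure Dw" using F(1) by simp
      then obtain yw where "yw \<in> Dw" "dist yw (Abs_hw x) < e" using \<open>e > 0\<close> closure_approachable by blast
      then show "\<exists>y\<in>D. dist y x < e"
      proof -
        have "dist (Rep_hw yw) x = dist yw (Abs_hw x)" using Rep_dist[of yw "Abs_hw x"] by simp
        moreover have "Rep_hw yw \<in> D" using \<open>yw \<in> Dw\<close> inDw by blast
        ultimately show ?thesis using \<open>dist yw (Abs_hw x) < e\<close> by (intro bexI[of _ "Rep_hw yw"]) auto
      qed
    qed
    then show ?thesis by auto
  qed
  show "\<exists>l0. \<forall>l\<ge>l0. \<forall>y. \<exists>x\<in>D. l *\<^sub>R x - A x - K x = y" for K :: "'a \<Rightarrow>\<^sub>L 'a"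
  proof -
    obtain l0 where l0: "\<forall>l\<ge>l0. \<forall>y. \<exists>x\<in>Dw. l *\<^sub>R x - Aw x - conjw K x = y" using F(2) by blast
    have "\<exists>x\<in>D. l *\<^sub>R x - A x - K x = y" if "l \<ge> l0" for l y
    proof -
      have "\<exists>x\<in>Dw. l *\<^sub>R x - Aw x - conjw K x = Abs_hw y" using l0 that by simp
      then obtain xw where xw: "xw \<in> Dw" "l *\<^sub>R xw - Aw xw - conjw K xw = Abs_hw y" by (rule bexE)
      have "Rep_hw xw \<in> D" using xw(1) inDw by blast
      moreover have "Rep_hw (l *\<^sub>R xw - Aw xw - conjw K xw) = l *\<^sub>R Rep_hw xw - A (Rep_hw xw) - K (Rep_hw xw)"
        by (simp only: Rep_diff Rep_add Rep_scale Aw_def conjw_apply RA)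
      ultimately show ?thesis using xw(2) by (intro bexI[of _ "Rep_hw xw"]) simp_all
    qed
    then show ?thesis by blast
  qed
  show "\<exists>l0. \<forall>l\<ge>l0. \<forall>y. \<exists>x\<in>D. l *\<^sub>R x + A x - K x = y" for K :: "'a \<Rightarrow>\<^sub>L 'a"
  proof -
    obtain l0 where l0: "\<forall>l\<ge>l0. \<forall>y. \<exists>x\<in>Dw. l *\<^sub>R x + Aw x - conjw K x = y" using F(3) by blast
    have "\<exists>x\<in>D. l *\<^sub>R x + A x - K x = y" if "l \<ge> l0" for l y
    proof -
      have "\<exists>x\<in>Dw. l *\<^sub>R x + Aw x - conjw K x = Abs_hw y" using l0 that by simp
      then obtain xw where xw: "xw \<in> Dw" "l *\<^sub>R xw + Aw xw - conjw K xw = Abs_hw y" by (rule bexE)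
      have "Rep_hw xw \<in> D" using xw(1) inDw by blast
      moreover have "Rep_hw (l *\<^sub>R xw + Aw xw - conjw K xw) = l *\<^sub>R Rep_hw xw + A (Rep_hw xw) - K (Rep_hw xw)"
        by (simp only: Rep_diff Rep_add Rep_scale Aw_def conjw_apply RA)
      ultimately show ?thesis using xw(2) by (intro bexI[of _ "Rep_hw xw"]) simp_all
    qed
    then show ?thesis by blast
  qed
qed

lemma inner_eq_dense:
  fixes z1 z2 :: "'a::real_inner"
  assumes "closure D = UNIV" "\<And>x. x \<in> D \<Longrightarrow> inner x z1 = inner x z2"
  shows "z1 = z2"
proof -
  have cl: "closed {x. inner x (z1 - z2) = 0}"
    by (intro closed_Collect_eq continuous_intros)
  have "D \<subseteq> {x. inner x (z1 - z2) = 0}" using assms(2) by (auto simp: inner_diff_right)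
  then have "closure D \<subseteq> {x. inner x (z1 - z2) = 0}" using cl closure_minimal by blast
  then have "z1 - z2 \<in> {x. inner x (z1 - z2) = 0}" using assms(1) by (metis UNIV_I subsetD)
  then have "inner (z1 - z2) (z1 - z2) = 0" by simp
  then show ?thesis by simp
qed

lemma riesz:
  fixes f :: "'a::{real_inner,complete_space} \<Rightarrow> real"
  assumes bl: "bounded_linear f"
  shows "\<exists>y. \<forall>x. f x = inner x y"
proof (cases "\<forall>x. f x = 0")
  case True then show ?thesis by (intro exI[of _ 0]) simp
next
  case False
  interpret f: bounded_linear f by (rule bl)
  obtain x1 where "f x1 \<noteq> 0" using False by blast
  define H where "H = {x. f x = 1}"
  have x1H: "(1 / f x1) *\<^sub>R x1 \<in> H" using \<open>f x1 \<noteq> 0\<close> by (simp add: H_def f.scaleR)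
  define d where "d = Inf (norm ` H)"
  have bdd: "bdd_below (norm ` H)" by (rule bdd_belowI[of _ 0]) auto
  have dle: "d \<le> norm x" if "x \<in> H" for x
    unfolding d_def using bdd that by (simp add: cInf_lower)
  have d0: "d \<ge> 0" unfolding d_def using x1H by (intro cInf_greatest) auto
  have "\<exists>x\<in>H. norm x < d + 1 / (Suc n)" for n
  proof -
    have "Inf (norm ` H) < d + 1 / Suc n" by (simp add: d_def)
    then obtain v where "v \<in> norm ` H" "v < d + 1 / Suc n"
      using cInf_lessD[of "norm ` H"] x1H by blast
    then show ?thesis by auto
  qed
  then obtain xs where xsH: "\<And>n. xs n \<in> H" and xsn: "\<And>n. norm (xs n) < d + 1 / Suc n"
    by metis
  have mid: "norm (xs m - xs n) ^ 2 \<le> 2 * (d + 1 / Suc m)^2 + 2 * (d + 1 / Suc n)^2 - 4 * d^2" for m n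
  proof -
    have "(1/2) *\<^sub>R (xs m + xs n) \<in> H" using xsH[of m] xsH[of n] by (simp add: H_def f.scaleR f.add)
    then have "d \<le> norm ((1/2) *\<^sub>R (xs m + xs n))" by (rule dle)
    then have "2 * d \<le> norm (xs m + xs n)" by simp
    then have "(2 * d)^2 \<le> norm (xs m + xs n) ^ 2" using d0 by (intro power_mono) auto
    then have a: "4 * d^2 \<le> norm (xs m + xs n) ^ 2" by (simp add: power_mult_distrib)
    have par: "norm (xs m - xs n) ^ 2 + norm (xs m + xs n) ^ 2 = 2 * norm (xs m) ^ 2 + 2 * norm (xs n) ^ 2"
      by (simp add: power2_norm_eq_inner inner_diff_left inner_diff_right inner_add_left inner_add_right inner_commute)
    have b: "norm (xs m) ^ 2 \<le> (d + 1 / Suc m)^2" using xsn[of m] by (intro power_mono) auto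
    have c: "norm (xs n) ^ 2 \<le> (d + 1 / Suc n)^2" using xsn[of n] by (intro power_mono) auto
    show ?thesis using a b c par by linarith
  qed
  have "Cauchy xs"
  proof (rule metric_CauchyI)
    fix e :: real assume "e > 0"
    define \<delta> where "\<delta> = min 1 (e^2 / (8 * (2 * d + 1)))"
    have dpos: "\<delta> > 0" using \<open>e > 0\<close> d0 by (simp add: \<delta>_def)
    obtain N where N: "1 / Suc N < \<delta>" using dpos by (metis nat_approx_posE)
    have "dist (xs m) (xs n) < e" if "m \<ge> N" "n \<ge> N" for m n
    proof -
      have em: "1 / Suc m \<le> 1 / Suc N" "1 / Suc n \<le> 1 / Suc N" using that by (auto simp: frac_le)
      define a where "a = 1 / real (Suc m)" define b where "b = 1 / real (Suc n)"
      have ab: "0 \<le> a" "a < \<delta>" "0 \<le> b" "b < \<delta>" using em N by (auto simp: a_def b_def)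
      have "norm (xs m - xs n) ^ 2 \<le> 2 * (d + a)^2 + 2 * (d + b)^2 - 4 * d^2" using mid by (simp add: a_def b_def)
      also have "\<dots> = 4 * d * a + 2 * a^2 + 4 * d * b + 2 * b^2" by (simp add: power2_eq_square algebra_simps)
      also have "\<dots> \<le> 4 * d * \<delta> + 2 * \<delta> + 4 * d * \<delta> + 2 * \<delta>"
      proof -
        have d1: "\<delta> \<le> 1" by (simp add: \<delta>_def)
        have "a^2 \<le> \<delta>"
        proof -
          have "a * a \<le> 1 * \<delta>" using ab d1 by (intro mult_mono) auto
          then show ?thesis by (simp add: power2_eq_square)
        qed
        moreover have "b^2 \<le> \<delta>"
        proof -
          have "b * b \<le> 1 * \<delta>" using ab d1 by (intro mult_mono) auto
          then show ?thesis by (simp add: power2_eq_square)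
        qed
        moreover have "d * a \<le> d * \<delta>" "d * b \<le> d * \<delta>" using ab d0 by (simp_all add: mult_left_mono)
        ultimately show ?thesis by linarith
      qed
      also have "\<dots> = 4 * (2 * d + 1) * \<delta>" by (simp add: algebra_simps)
      also have "\<dots> \<le> 4 * (2 * d + 1) * (e^2 / (8 * (2 * d + 1)))"
        using d0 by (intro mult_left_mono) (auto simp: \<delta>_def)
      also have "\<dots> = e^2 / 2" using d0 by (simp add: field_simps)
      also have "\<dots> < e^2" using \<open>e > 0\<close> by simp
      finally have "norm (xs m - xs n) ^ 2 < e ^ 2" .
      then show ?thesis using \<open>e > 0\<close> by (simp add: dist_norm power_less_imp_less_base)
    qed
    then show "\<exists>N. \<forall>m\<ge>N. \<forall>n\<ge>N. dist (xs m) (xs n) < e" by blast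
  qed
  then obtain z where z: "xs \<longlonglongrightarrow> z" using Cauchy_convergent_iff convergent_def by blast
  have "(\<lambda>n. f (xs n)) \<longlonglongrightarrow> f z" by (intro f.tendsto z)
  moreover have "(\<lambda>n. f (xs n)) = (\<lambda>n. 1)" using xsH by (simp add: H_def)
  ultimately have fz: "f z = 1" using LIMSEQ_unique tendsto_const by metis
  have nz: "norm z = d"
  proof -
    have "d \<le> norm z" using fz by (intro dle) (simp add: H_def)
    moreover have "norm z \<le> d"
    proof (rule tendsto_le[OF trivial_limit_sequentially _ tendsto_norm[OF z]])
      show "(\<lambda>n. d + 1 / Suc n) \<longlonglongrightarrow> d"
        using tendsto_add[OF tendsto_const LIMSEQ_Suc[OF lim_const_over_n[of 1]], of d] by simp
      show "\<forall>\<^sub>F n in sequentially. norm (xs n) \<le> d + 1 / Suc n" using xsn by (simp add: less_imp_le)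
    qed
    ultimately show ?thesis by simp
  qed
  have orth: "inner z v = 0" if "f v = 0" for v
  proof (rule ccontr)
    assume ne: "inner z v \<noteq> 0"
    define c where "c = inner z v"
    define q where "q = inner v v + 1"
    have p: "q > 0" by (simp add: q_def add_nonneg_pos)
    define t where "t = - c / q"
    have "f (z + t *\<^sub>R v) = 1" using fz that by (simp add: f.add f.scaleR)
    then have "d \<le> norm (z + t *\<^sub>R v)" by (intro dle) (simp add: H_def)
    then have "norm z ^ 2 \<le> norm (z + t *\<^sub>R v) ^ 2" using nz d0 by (simp add: power_mono)
    moreover have "norm (z + t *\<^sub>R v) ^ 2 = norm z ^ 2 + 2 * t * c + t^2 * inner v v"
      unfolding power2_norm_eq_inner by (simp add: inner_add_left inner_add_right inner_commute c_def power2_eq_square algebra_simps)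
    ultimately have "0 \<le> 2 * t * c + t^2 * inner v v" by linarith
    moreover have "2 * t * c + t^2 * inner v v < 0"
    proof -
      have "2 * t * c + t^2 * inner v v = c^2 * (inner v v - 2 * q) / q^2"
        using p by (simp add: t_def power2_eq_square field_simps)
      also have "\<dots> < 0" using p ne by (intro divide_neg_pos mult_pos_neg) (auto simp: c_def q_def)
      finally show ?thesis .
    qed
    ultimately show False by linarith
  qed
  have zn: "inner z z > 0" using fz by (metis f.zero inner_gt_zero_iff zero_neq_one)
  have "f x = inner x ((1 / inner z z) *\<^sub>R z)" for x
  proof -
    have "f (x - f x *\<^sub>R z) = 0" using fz by (simp add: f.diff f.scaleR)
    then have "inner z (x - f x *\<^sub>R z) = 0" by (rule orth)
    then have "inner x z = f x * inner z z" by (simp add: inner_diff_right inner_commute)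
    then show ?thesis using zn by simp
  qed
  then show ?thesis by blast
qed

lemma inner_unique:
  fixes z1 z2 :: "'a::real_inner"
  assumes "\<And>x. inner x z1 = inner x z2" shows "z1 = z2"
  using inner_eq_dense[of UNIV z1 z2] assms by simp

lemma adjoint_exists:
  fixes R :: "'a::{real_inner,complete_space} \<Rightarrow>\<^sub>L 'b::real_inner"
  shows "\<exists>Ra :: 'b \<Rightarrow>\<^sub>L 'a. is_badjoint R Ra"
proof -
  have ex: "\<exists>z. \<forall>x. inner (R x) y = inner x z" for y
  proof (rule riesz)
    show "bounded_linear (\<lambda>x. inner (R x) y)"
      using bounded_linear_compose[OF bounded_linear_inner_left blinfun.bounded_linear_right[of R]]
      by (simp add: o_def)
  qed
  define Ra where "Ra y = (SOME z. \<forall>x. inner (R x) y = inner x z)" for y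
  have Ra: "inner (R x) y = inner x (Ra y)" for x y
    unfolding Ra_def using someI_ex[OF ex[of y]] by blast
  have bl: "bounded_linear Ra"
  proof (rule bounded_linear_intro[of _ "norm R"])
    fix y1 y2 show "Ra (y1 + y2) = Ra y1 + Ra y2"
      by (rule inner_unique) (simp add: Ra[symmetric] inner_add_right)
  next
    fix r y show "Ra (r *\<^sub>R y) = r *\<^sub>R Ra y"
      by (rule inner_unique) (simp add: Ra[symmetric])
  next
    fix y
    have "norm (Ra y) ^ 2 = inner (R (Ra y)) y" by (simp add: Ra power2_norm_eq_inner)
    also have "\<dots> \<le> norm (R (Ra y)) * norm y" by (rule norm_cauchy_schwarz)
    also have "\<dots> \<le> norm R * norm (Ra y) * norm y" by (simp add: mult_right_mono norm_blinfun)
    finally have "norm (Ra y) * norm (Ra y) \<le> (norm R * norm y) * norm (Ra y)"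
      by (simp add: power2_eq_square algebra_simps)
    then show "norm (Ra y) \<le> norm y * norm R"
      by (cases "norm (Ra y) = 0") (auto simp: mult.commute)
  qed
  show ?thesis
    by (rule exI[of _ "Blinfun Ra"]) (simp add: is_badjoint_def bounded_linear_Blinfun_apply[OF bl] Ra)
qed

lemma binverse_selfadjoint:
  assumes "is_binverse R Ri" "selfadjoint_op R"
  shows "selfadjoint_op Ri"
proof -
  have RRi: "R (Ri v) = v" for v using assms(1)
    by (metis blinfun_apply_blinfun_compose blinfun_apply_id_blinfun is_binverse_def)
  have "inner (Ri u) v = inner u (Ri v)" for u v
  proof -
    have "inner (Ri u) v = inner (Ri u) (R (Ri v))" by (simp add: RRi)
    also have "\<dots> = inner (R (Ri u)) (Ri v)"
      using assms(2) by (simp add: selfadjoint_op_def is_badjoint_def)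
    finally show ?thesis by (simp add: RRi)
  qed
  then show ?thesis by (simp add: selfadjoint_op_def is_badjoint_def)
qed

lemma nonneg_cs:
  fixes P :: "'a::real_inner \<Rightarrow>\<^sub>L 'a"
  assumes sa: "selfadjoint_op P" and nn: "nonneg_op P"
  shows "(inner (P x) y)^2 \<le> inner (P x) x * inner (P y) y"
proof -
  define a b c where "a = inner (P x) x" and "b = inner (P x) y" and "c = inner (P y) y"
  have sym: "inner (P y) x = b" using sa by (simp add: selfadjoint_op_def is_badjoint_def b_def inner_commute)
  have q: "0 \<le> a + 2 * t * b + t^2 * c" for t
  proof -
    have "0 \<le> inner (P (x + t *\<^sub>R y)) (x + t *\<^sub>R y)" using nn by (simp add: nonneg_op_def)
    also have "\<dots> = a + 2 * t * b + t^2 * c"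
      using sym by (simp add: blinfun.add_right blinfun.scaleR_right inner_add_left inner_add_right
          a_def b_def c_def power2_eq_square algebra_simps)
    finally show ?thesis .
  qed
  have c0: "c \<ge> 0" using nn by (simp add: nonneg_op_def c_def)
  show ?thesis
  proof (cases "c = 0")
    case True
    show ?thesis
    proof (cases "b = 0")
      case False
      have "0 \<le> a + 2 * (- (a + 1) / (2 * b)) * b + (- (a + 1) / (2 * b))^2 * c" by (rule q)
      then have False using False True by (simp add: field_simps)
      then show ?thesis ..
    qed (simp add: True b_def[symmetric] a_def[symmetric] c_def[symmetric])
  next
    case False
    then have cp: "c > 0" using c0 by simp
    have "0 \<le> a + 2 * (- b / c) * b + (- b / c)^2 * c" by (rule q)
    then have "0 \<le> a - b^2 / c" using cp by (simp add: power2_eq_square field_simps)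
    then have "b^2 \<le> a * c" using cp by (simp add: field_simps)
    then show ?thesis by (simp add: a_def b_def c_def)
  qed
qed

lemma coercive_of_inv:
  fixes P :: "'a::real_inner \<Rightarrow>\<^sub>L 'a"
  assumes sa: "selfadjoint_op P" and nn: "nonneg_op P" and inv: "binvertible P"
  shows "\<exists>c>0. \<forall>x. c * (norm x)^2 \<le> inner (P x) x"
proof -
  obtain Pi where Pi: "is_binverse P Pi" using inv by (auto simp: binvertible_def)
  have PiP: "Pi (P x) = x" for x using Pi
    by (metis blinfun_apply_blinfun_compose blinfun_apply_id_blinfun is_binverse_def)
  define K where "K = (norm Pi)^2 * norm P + 1"
  have Kp: "K > 0" by (simp add: K_def add_nonneg_pos)
  have "(norm x)^2 \<le> K * inner (P x) x" for x
  proof -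
    have nnx: "inner (P x) x \<ge> 0" using nn by (simp add: nonneg_op_def)
    have a: "(norm (P x))^2 \<le> inner (P x) x * norm P"
    proof (cases "P x = 0")
      case True then show ?thesis using nnx by simp
    next
      case False
      have "(inner (P x) (P x))^2 \<le> inner (P x) x * inner (P (P x)) (P x)"
        by (rule nonneg_cs[OF sa nn])
      also have "inner (P (P x)) (P x) \<le> norm P * (norm (P x))^2"
        using norm_cauchy_schwarz[of "P (P x)" "P x"] norm_blinfun[of P "P x"]
        by (smt (verit) mult_right_mono norm_ge_zero power2_eq_square mult.assoc)
      then have "inner (P x) x * inner (P (P x)) (P x) \<le> inner (P x) x * (norm P * (norm (P x))^2)"
        using nnx by (rule mult_left_mono)
      finally have "(norm (P x))^2 * (norm (P x))^2 \<le> (inner (P x) x * norm P) * (norm (P x))^2"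
        by (simp add: power2_norm_eq_inner[symmetric] power2_eq_square algebra_simps)
      moreover have "(norm (P x))^2 > 0" using False by simp
      ultimately show ?thesis by (rule mult_right_le_imp_le)
    qed
    have "norm x \<le> norm Pi * norm (P x)" using norm_blinfun[of Pi "P x"] by (simp add: PiP)
    then have "(norm x)^2 \<le> (norm Pi)^2 * (norm (P x))^2"
      by (metis norm_ge_zero power_mono power_mult_distrib)
    also have "\<dots> \<le> (norm Pi)^2 * (inner (P x) x * norm P)" using a by (simp add: mult_left_mono)
    also have "\<dots> \<le> K * inner (P x) x" using nnx by (simp add: K_def algebra_simps)
    finally show ?thesis .
  qed
  then have "\<forall>x. (1/K) * (norm x)^2 \<le> inner (P x) x" using Kp by (simp add: field_simps)
  then show ?thesis using Kp by (intro exI[of _ "1/K"]) simp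
qed

lemma coercive_inv:
  fixes S :: "'a::{real_inner,complete_space} \<Rightarrow>\<^sub>L 'a"
  assumes c: "c > 0" and co: "\<And>x. c * (norm x)^2 \<le> inner (S x) x"
  shows "\<exists>Si. is_binverse S Si"
proof -
  have lb: "c * norm x \<le> norm (S x)" for x
  proof (cases "x = 0")
    case False
    have "c * norm x * norm x \<le> norm (S x) * norm x"
      using co[of x] norm_cauchy_schwarz[of "S x" x] by (simp add: power2_eq_square)
    then show ?thesis using False by simp
  qed simp
  have inj: "x = y" if "S x = S y" for x y
  proof -
    have "c * norm (x - y) \<le> norm (S (x - y))" by (rule lb)
    also have "S (x - y) = 0" using that by (simp add: blinfun.diff_right)
    finally show ?thesis using c by (simp add: mult_le_0_iff)
  qed
  define t where "t = c / ((norm S)^2 + c^2)"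
  have den: "(norm S)^2 + c^2 > 0" using c by (simp add: add_nonneg_pos)
  have tp: "t > 0" using c den by (simp add: t_def)
  have tc: "t * c \<le> 1" "t * c > 0"
  proof -
    have "t * c = c^2 / ((norm S)^2 + c^2)" by (simp add: t_def power2_eq_square)
    also have "\<dots> \<le> 1" using den by simp
    finally show "t * c \<le> 1" .
    show "t * c > 0" using tp c by simp
  qed
  have ttS: "t^2 * (norm S)^2 \<le> t * c"
  proof -
    have "t^2 * (norm S)^2 \<le> t^2 * ((norm S)^2 + c^2)" by (simp add: mult_left_mono)
    also have "\<dots> = t * c" using den by (simp add: t_def power2_eq_square)
    finally show ?thesis .
  qed
  define k where "k = sqrt (1 - t * c)"
  have k: "0 \<le> k" "k < 1" using tc by (auto simp: k_def)
  have contr: "norm (u - t *\<^sub>R S u) \<le> k * norm u" for u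
  proof -
    have "(norm (u - t *\<^sub>R S u))^2 = (norm u)^2 - 2 * t * inner (S u) u + t^2 * (norm (S u))^2"
      unfolding power2_norm_eq_inner
      by (simp add: inner_diff_left inner_diff_right inner_commute power2_eq_square algebra_simps)
    also have "\<dots> \<le> (norm u)^2 - 2 * t * (c * (norm u)^2) + t^2 * ((norm S)^2 * (norm u)^2)"
    proof -
      have "t * (c * (norm u)^2) \<le> t * inner (S u) u" using co[of u] tp by (simp add: mult_left_mono)
      moreover have "(norm (S u))^2 \<le> (norm S)^2 * (norm u)^2"
        using norm_blinfun[of S u] by (metis norm_ge_zero power_mono power_mult_distrib)
      then have "t^2 * (norm (S u))^2 \<le> t^2 * ((norm S)^2 * (norm u)^2)" by (simp add: mult_left_mono)
      ultimately show ?thesis by linarith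
    qed
    also have "\<dots> = (norm u)^2 * (1 - 2 * (t * c) + t^2 * (norm S)^2)" by (simp add: algebra_simps)
    also have "\<dots> \<le> (norm u)^2 * (1 - t * c)" using ttS by (intro mult_left_mono) (auto simp: mult.commute)
    also have "\<dots> = (k * norm u)^2" using tc by (simp add: k_def power_mult_distrib)
    finally show ?thesis using k by (metis mult_nonneg_nonneg norm_ge_zero power2_le_imp_le)
  qed
  have surj: "\<exists>x. S x = y" for y
  proof -
    define \<Phi> where "\<Phi> v = v - t *\<^sub>R (S v - y)" for v
    have "\<exists>!v. \<Phi> v = v"
    proof (rule banach_fix_type[OF k])
      show "\<forall>v w. dist (\<Phi> v) (\<Phi> w) \<le> k * dist v w"
      proof (intro allI)
        fix v w
        have "\<Phi> v - \<Phi> w = (v - w) - t *\<^sub>R S (v - w)"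
          by (simp add: \<Phi>_def blinfun.diff_right algebra_simps)
        then show "dist (\<Phi> v) (\<Phi> w) \<le> k * dist v w" using contr[of "v - w"] by (simp add: dist_norm)
      qed
    qed
    then obtain v where "\<Phi> v = v" by blast
    then have "t *\<^sub>R (S v - y) = 0" by (simp add: \<Phi>_def)
    then show ?thesis using tp by auto
  qed
  define Si' where "Si' y = (SOME x. S x = y)" for y
  have SSi: "S (Si' y) = y" for y unfolding Si'_def using someI_ex[OF surj] by blast
  have bl: "bounded_linear Si'"
  proof (rule bounded_linear_intro[of _ "1/c"])
    fix y1 y2 show "Si' (y1 + y2) = Si' y1 + Si' y2" by (rule inj) (simp add: SSi blinfun.add_right)
  next
    fix r y show "Si' (r *\<^sub>R y) = r *\<^sub>R Si' y" by (rule inj) (simp add: SSi blinfun.scaleR_right)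
  next
    fix y
    have "c * norm (Si' y) \<le> norm y" using lb[of "Si' y"] by (simp add: SSi)
    then show "norm (Si' y) \<le> norm y * (1/c)" using c by (simp add: field_simps)
  qed
  have SiS: "Si' (S x) = x" for x by (rule inj) (simp add: SSi)
  show ?thesis
    by (rule exI[of _ "Blinfun Si'"])
       (auto simp: is_binverse_def bounded_linear_Blinfun_apply[OF bl] SiS SSi intro!: blinfun_eqI)
qed

lemma binv_apply:
  assumes "is_binverse S Si"
  shows "Si (S x) = x" "S (Si x) = x"
  using assms by (metis blinfun_apply_blinfun_compose blinfun_apply_id_blinfun is_binverse_def)+

lemma dom_lemma:
  fixes Dl Di :: "'a::real_inner \<Rightarrow>\<^sub>L 'a" and A1 A2 :: "'a \<Rightarrow> 'a"
  assumes inv: "is_binverse Dl Di"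
    and E: "\<And>x y. x \<in> D \<Longrightarrow> y \<in> D \<Longrightarrow> inner (Dl (A1 x)) y + inner (Dl x) (A2 y) = 0"
    and s1: "\<forall>y. \<exists>x\<in>D. l *\<^sub>R x - A1 x = y"
    and s2: "\<forall>y. \<exists>x\<in>D. l *\<^sub>R x + A2 x = y"
    and v: "\<forall>x\<in>D. inner (A2 x) v = inner x z"
  shows "Di v \<in> D"
proof -
  obtain u where u: "u \<in> D" "l *\<^sub>R u - A1 u = Di (l *\<^sub>R v + z)" using s1 by blast
  have Du: "l *\<^sub>R Dl u - Dl (A1 u) = l *\<^sub>R v + z"
  proof -
    have "Dl (l *\<^sub>R u - A1 u) = l *\<^sub>R v + z" using u(2) binv_apply(2)[OF inv] by simp
    then show ?thesis by (simp add: blinfun.diff_right blinfun.scaleR_right)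
  qed
  have orth: "inner (l *\<^sub>R x + A2 x) (Dl u - v) = 0" if x: "x \<in> D" for x
  proof -
    have e: "inner (Dl (A1 u)) x + inner (Dl u) (A2 x) = 0" by (rule E[OF u(1) x])
    have "inner (Dl (A1 u)) x = inner (l *\<^sub>R Dl u - (l *\<^sub>R v + z)) x" using Du by (metis diff_diff_eq2 diff_add_cancel add_diff_cancel_left' diff_diff_cancel)
    then have e2: "inner (Dl (A1 u)) x = l * inner (Dl u) x - l * inner v x - inner z x"
      by (simp add: inner_diff_left inner_add_left)
    show ?thesis
      using e e2 v x by (simp add: inner_add_left inner_diff_right inner_commute algebra_simps)
  qed
  obtain x where x: "x \<in> D" "l *\<^sub>R x + A2 x = Dl u - v" using s2 by blast
  have "inner (Dl u - v) (Dl u - v) = 0" using orth[OF x(1)] x(2) by simp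
  then have "Dl u = v" by simp
  then have "Di v = u" using binv_apply(1)[OF inv] by metis
  then show ?thesis using u(1) by simp
qed

lemma spec_lemma:
  fixes Dl Di :: "'a::{real_inner,complete_space} \<Rightarrow>\<^sub>L 'a" and A1 A2 :: "'a \<Rightarrow> 'a" and l :: complex
  assumes inv: "is_binverse Dl Di"
    and E: "\<And>x y. x \<in> D \<Longrightarrow> y \<in> D \<Longrightarrow> inner (Dl (A1 x)) y + inner (Dl x) (A2 y) = 0"
    and dense: "closure D = UNIV"
    and Dneg: "\<And>x. x \<in> D \<Longrightarrow> -x \<in> D" and D0: "0 \<in> D"
    and A20: "A2 0 = 0"
    and domfact: "\<And>v z. (\<forall>x\<in>D. inner (A2 x) v = inner x z) \<Longrightarrow> Di v \<in> D"
    and res: "in_resolvent D A2 l"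
  shows "in_resolvent D A1 (-l)"
proof -
  obtain R :: "('a \<times> 'a) \<Rightarrow>\<^sub>L ('a \<times> 'a)" where R1: "\<And>z. R z \<in> D \<times> D" "\<And>z. cshift_op A2 l (R z) = z"
    and R2: "\<And>w. w \<in> D \<times> D \<Longrightarrow> R (cshift_op A2 l w) = w"
    using res unfolding in_resolvent_def by blast
  obtain Ra where Ra: "is_badjoint R Ra" using adjoint_exists by blast
  have RaI: "inner (R x) y = inner x (Ra y)" for x y using Ra unfolding is_badjoint_def by blast
  define a where "a = Re l"
  define b where "b = Im l"
  define C1 where "C1 = cshift_op A1 (-l)"
  define C2 where "C2 = cshift_op A2 l"
  have C1: "C1 u = (- a *\<^sub>R fst u + b *\<^sub>R snd u - A1 (fst u), - b *\<^sub>R fst u - a *\<^sub>R snd u - A1 (snd u))" for u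
    by (simp add: C1_def cshift_op_def a_def b_def)
  have C2: "C2 w = (a *\<^sub>R fst w - b *\<^sub>R snd w - A2 (fst w), b *\<^sub>R fst w + a *\<^sub>R snd w - A2 (snd w))" for w
    by (simp add: C2_def cshift_op_def a_def b_def)
  define L where "L u = (Dl (fst u), - Dl (snd u))" for u :: "'a \<times> 'a"
  define Li where "Li u = (Di (fst u), - Di (snd u))" for u :: "'a \<times> 'a"
  have LiL: "Li (L u) = u" for u by (simp add: L_def Li_def binv_apply[OF inv] blinfun.minus_right)
  have LLi: "L (Li u) = u" for u by (simp add: L_def Li_def binv_apply[OF inv] blinfun.minus_right)
  have blL: "bounded_linear L" unfolding L_def
    by (intro bounded_linear_Pair bounded_linear_minus
        bounded_linear_compose[OF blinfun.bounded_linear_right bounded_linear_fst]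
        bounded_linear_compose[OF blinfun.bounded_linear_right bounded_linear_snd])
  have blLi: "bounded_linear Li" unfolding Li_def
    by (intro bounded_linear_Pair bounded_linear_minus
        bounded_linear_compose[OF blinfun.bounded_linear_right bounded_linear_fst]
        bounded_linear_compose[OF blinfun.bounded_linear_right bounded_linear_snd])
  interpret L: bounded_linear L by (rule blL)
  interpret Li: bounded_linear Li by (rule blLi)
  define R1f where "R1f z = - Li (Ra (L z))" for z
  have blR1: "bounded_linear R1f" unfolding R1f_def
    by (intro bounded_linear_minus bounded_linear_compose[OF blLi
        bounded_linear_compose[OF blinfun.bounded_linear_right blL]])
  have KI: "inner (C2 w) (L u) = - inner w (L (C1 u))" if w: "w \<in> D \<times> D" and u: "u \<in> D \<times> D" for w u
  proof -
    obtain w1 w2 u1 u2 where wu: "w = (w1, w2)" "u = (u1, u2)" "w1 \<in> D" "w2 \<in> D" "u1 \<in> D" "u2 \<in> D"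
      using w u by auto
    have e1: "inner (Dl (A1 u1)) w1 + inner (Dl u1) (A2 w1) = 0" by (rule E) (use wu in auto)
    have e2: "inner (Dl (A1 u2)) w2 + inner (Dl u2) (A2 w2) = 0" by (rule E) (use wu in auto)
    show ?thesis
      using e1 e2 unfolding wu C1 C2 L_def
      by (simp add: inner_diff_left inner_diff_right inner_add_left inner_add_right blinfun.diff_right
          blinfun.add_right blinfun.scaleR_right blinfun.minus_right inner_commute algebra_simps)
  qed
  have i: "R1f (C1 u) = u" if u: "u \<in> D \<times> D" for u
  proof -
    have "Ra (L (C1 u)) = - L u"
    proof (rule inner_unique)
      fix y
      have "inner y (Ra (L (C1 u))) = inner (R y) (L (C1 u))" by (simp add: RaI)
      also have "\<dots> = - inner (C2 (R y)) (L u)" using KI[OF R1(1) u, of y] by simp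
      also have "C2 (R y) = y" using R1(2) by (simp add: C2_def)
      finally show "inner y (Ra (L (C1 u))) = inner y (- L u)" by simp
    qed
    then show ?thesis by (simp add: R1f_def Li_def L_def blinfun.minus_right binv_apply[OF inv])
  qed
  have vprop: "inner (C2 w) (Ra (L z)) = inner w (L z)" if "w \<in> D \<times> D" for w z
    using R2[OF that] by (simp add: RaI[symmetric] C2_def)
  have ii: "R1f z \<in> D \<times> D" for z
  proof -
    define v where "v = Ra (L z)"
    have z1: "\<forall>x\<in>D. inner (A2 x) (fst v) = inner x (a *\<^sub>R fst v + b *\<^sub>R snd v - Dl (fst z))"
    proof
      fix x assume x: "x \<in> D"
      have xD0: "(x, 0) \<in> D \<times> D" using x D0 by simp
      have "inner (C2 (x, 0)) v = inner (x, 0) (L z)" using vprop[OF xD0, of z] by (simp add: v_def)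
      then
      show "inner (A2 x) (fst v) = inner x (a *\<^sub>R fst v + b *\<^sub>R snd v - Dl (fst z))"
        unfolding C2 L_def using surjective_pairing[of v]
        by (cases v) (simp add: A20 inner_diff_left inner_diff_right inner_add_right algebra_simps)
    qed
    have z2: "\<forall>x\<in>D. inner (A2 x) (snd v) = inner x (- b *\<^sub>R fst v + a *\<^sub>R snd v + Dl (snd z))"
    proof
      fix x assume x: "x \<in> D"
      have xD0: "(0, x) \<in> D \<times> D" using x D0 by simp
      have "inner (C2 (0, x)) v = inner (0, x) (L z)" using vprop[OF xD0, of z] by (simp add: v_def)
      then
      show "inner (A2 x) (snd v) = inner x (- b *\<^sub>R fst v + a *\<^sub>R snd v + Dl (snd z))"
        unfolding C2 L_def using surjective_pairing[of v]
        by (cases v) (simp add: A20 inner_diff_left inner_diff_right inner_add_right algebra_simps)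
    qed
    have "Di (fst v) \<in> D" "Di (snd v) \<in> D" using domfact z1 z2 by blast+
    then show ?thesis by (simp add: R1f_def v_def[symmetric] Li_def Dneg)
  qed
  have iii: "C1 (R1f z) = z" for z
  proof -
    define v where "v = Ra (L z)"
    define u where "u = R1f z"
    have u: "u \<in> D \<times> D" using ii by (simp add: u_def)
    have Lu: "L u = - v" by (simp add: u_def R1f_def v_def L_def Li_def blinfun.minus_right binv_apply[OF inv] prod_eq_iff)
    have "L (C1 u) = L z"
    proof (rule inner_eq_dense[of "D \<times> D"])
      show "closure (D \<times> D) = UNIV" by (simp add: closure_Times dense)
      fix w assume w: "w \<in> D \<times> D"
      have "inner w (L (C1 u)) = - inner (C2 w) (L u)" using KI[OF w u] by simp
      also have "\<dots> = inner (C2 w) v" by (simp add: Lu)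
      also have "\<dots> = inner w (L z)" using vprop[OF w] by (simp add: v_def)
      finally show "inner w (L (C1 u)) = inner w (L z)" .
    qed
    then have "Li (L (C1 u)) = Li (L z)" by simp
    then show ?thesis by (simp add: LiL u_def)
  qed
  show ?thesis
    unfolding in_resolvent_def
    by (rule exI[of _ "Blinfun R1f"])
       (simp add: bounded_linear_Blinfun_apply[OF blR1] ii iii[unfolded C1_def] i[unfolded C1_def])
qed

theorem mainTheorem4:
  fixes G :: "real \<Rightarrow> ('x::{real_inner,complete_space} \<Rightarrow>\<^sub>L 'x)"
    and D :: "'x set" and A :: "'x \<Rightarrow> 'x"
    and B :: "'u::{real_inner,complete_space} \<Rightarrow>\<^sub>L 'x" and Bs :: "'x \<Rightarrow>\<^sub>L 'u"
    and Q :: "'x \<Rightarrow>\<^sub>L 'x" and R Ri :: "'u \<Rightarrow>\<^sub>L 'u"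
    and P N :: "'x \<Rightarrow>\<^sub>L 'x" and T0 :: real
  assumes group: "c0_group G"
    and gen: "is_generator G D A"
    and Badj: "is_badjoint B Bs"
    and Q_sa: "selfadjoint_op Q" and Q_pd: "posdef_op Q" and Q_inv: "binvertible Q"
    and R_sa: "selfadjoint_op R" and R_pd: "posdef_op R" and R_inv: "is_binverse R Ri"
    and T0_pos: "T0 > 0"
    and ctrl: "\<And>T. T > T0 \<Longrightarrow> exactly_controllable G B T"
    and P_sa: "selfadjoint_op P" and P_nn: "nonneg_op P" and P_ric: "riccati_sol D A B Bs Ri Q P"
    and P_pd: "posdef_op P" and P_inv: "binvertible P"
    and N_sa: "selfadjoint_op N" and N_np: "nonpos_op N" and N_ric: "riccati_sol D A B Bs Ri Q N"
    and N_nd: "negdef_op N" and N_inv: "binvertible N"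
  shows "selfadjoint_op (P - N) \<and> posdef_op (P - N) \<and>
    (\<exists>Di. is_binverse (P - N) Di
       \<and> (\<forall>z. Tinv_mat Di N P (Tmat N P z) = z \<and> Tmat N P (Tinv_mat Di N P z) = z)
       \<and> (\<forall>z. Tmat N P z \<in> hamiltonian_dom D A \<longleftrightarrow> z \<in> D \<times> D)
       \<and> (\<forall>z\<in>D \<times> D. Tinv_mat Di N P (hamiltonian D A B Bs Ri Q (Tmat N P z))
            = (closed_loop A B Bs Ri N (fst z), closed_loop A B Bs Ri P (snd z))))
    \<and> (\<forall>x\<in>D. blinfun_apply (P - N) x \<in> adj_dom D (closed_loop A B Bs Ri N)
         \<and> adj_op D (closed_loop A B Bs Ri N) (blinfun_apply (P - N) x)
            = - blinfun_apply (P - N) (closed_loop A B Bs Ri P x))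
    \<and> op_spectrum D (closed_loop A B Bs Ri P) = uminus ` op_spectrum D (closed_loop A B Bs Ri N)"
proof -
  interpret c0g0 G D A by unfold_locales (rule group gen)+
  note SF = c0g_facts_gen[OF group gen]
  have dense: "closure D = UNIV" by (rule SF(1))
  have D0: "0 \<in> D" and A0: "A 0 = 0" using genI[of 0 0] by simp_all
  have Dneg: "- x \<in> D" if "x \<in> D" for x using D_scale(1)[OF that, of "-1"] by simp
  have Ri_sa: "selfadjoint_op Ri" by (rule binverse_selfadjoint[OF R_inv R_sa])
  define KB where "KB = B o\<^sub>L (Ri o\<^sub>L Bs)"
  have KBa: "KB w = B (Ri (Bs w))" for w by (simp add: KB_def)
  have sa: "\<And>S x y. selfadjoint_op S \<Longrightarrow> inner (S x) y = inner x (S y)"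
    by (simp add: selfadjoint_op_def is_badjoint_def)
  have Bad: "inner (B u) v = inner u (Bs v)" for u v using Badj by (simp add: is_badjoint_def)
  have KB_sym: "inner (KB u) v = inner u (KB v)" for u v
  proof -
    have "inner (KB u) v = inner (Ri (Bs u)) (Bs v)" by (simp add: KBa Bad)
    also have "\<dots> = inner (Bs u) (Ri (Bs v))" by (rule sa[OF Ri_sa])
    also have "\<dots> = inner u (KB v)" using Bad[of "Ri (Bs v)" u] by (simp add: KBa inner_commute)
    finally show ?thesis .
  qed
  define AP where "AP = closed_loop A B Bs Ri P"
  define AN where "AN = closed_loop A B Bs Ri N"
  have APa: "AP x = A x - KB (P x)" for x by (simp add: AP_def closed_loop_def KBa)
  have ANa: "AN x = A x - KB (N x)" for x by (simp add: AN_def closed_loop_def KBa)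
  have ric: "inner (Y (A x)) y + inner (Y x) (A y) - inner (Y (KB (Y x))) y = - inner (Q x) y"
    if "riccati_sol D A B Bs Ri Q Y" "x \<in> D" "y \<in> D" for Y x y
    using that by (simp add: riccati_sol_def KBa)
  define Dl where "Dl = P - N"
  have Dla: "Dl x = P x - N x" for x by (simp add: Dl_def blinfun.diff_left)
  have Dl_sa: "selfadjoint_op Dl"
    using sa[OF P_sa] sa[OF N_sa]
    by (simp add: selfadjoint_op_def is_badjoint_def Dla inner_diff_left inner_diff_right)
  have Dl_pd: "posdef_op Dl"
    using P_pd N_nd by (force simp: posdef_op_def negdef_op_def Dla inner_diff_left)
  obtain c where c: "c > 0" "\<And>x. c * (norm x)^2 \<le> inner (P x) x"
    using coercive_of_inv[OF P_sa P_nn P_inv] by blast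
  have "c * (norm x)^2 \<le> inner (Dl x) x" for x
    using c(2)[of x] N_np by (simp add: nonpos_op_def Dla inner_diff_left) (smt (verit))
  then obtain Di where inv: "is_binverse Dl Di" using coercive_inv[OF c(1)] by blast
  note DiD = binv_apply(1)[OF inv] and DDi = binv_apply(2)[OF inv]
  have E: "inner (Dl (AP x)) y + inner (Dl x) (AN y) = 0" if "x \<in> D" "y \<in> D" for x y
  proof -
    have rP: "inner (P (A x)) y + inner (P x) (A y) - inner (P (KB (P x))) y = - inner (Q x) y"
      by (rule ric[OF P_ric that])
    have rN: "inner (N (A x)) y + inner (N x) (A y) - inner (N (KB (N x))) y = - inner (Q x) y"
      by (rule ric[OF N_ric that])
    have S1: "inner (N (KB (N x))) y = inner (N x) (KB (N y))"
      by (simp add: sa[OF N_sa] KB_sym)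
    have S2: "inner (N (KB (P x))) y = inner (P x) (KB (N y))"
      by (simp add: sa[OF N_sa] KB_sym)
    show ?thesis using rP rN S1 S2
      by (simp add: Dla APa ANa blinfun.diff_right inner_diff_left inner_diff_right)
  qed
  have E': "inner (Dl (AN x)) y + inner (Dl x) (AP y) = 0" if "x \<in> D" "y \<in> D" for x y
  proof -
    have "inner (Dl (AP y)) x + inner (Dl y) (AN x) = 0" by (rule E[OF that(2,1)])
    moreover have "inner (Dl (AN x)) y = inner (Dl y) (AN x)"
      using sa[OF Dl_sa, of "AN x" y] sa[OF Dl_sa, of y "AN x"] by (simp add: inner_commute)
    moreover have "inner (Dl x) (AP y) = inner (Dl (AP y)) x"
      using sa[OF Dl_sa, of x "AP y"] by (simp add: inner_commute)
    ultimately show ?thesis by linarith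
  qed
  define KP where "KP = KB o\<^sub>L P"
  define KN where "KN = KB o\<^sub>L N"
  obtain l1 where l1: "\<forall>l\<ge>l1. \<forall>y. \<exists>x\<in>D. l *\<^sub>R x - A x - (- KP) x = y" using SF(2) by blast
  obtain l2 where l2: "\<forall>l\<ge>l2. \<forall>y. \<exists>x\<in>D. l *\<^sub>R x - A x - (- KN) x = y" using SF(2) by blast
  obtain l3 where l3: "\<forall>l\<ge>l3. \<forall>y. \<exists>x\<in>D. l *\<^sub>R x + A x - KP x = y" using SF(3) by blast
  obtain l4 where l4: "\<forall>l\<ge>l4. \<forall>y. \<exists>x\<in>D. l *\<^sub>R x + A x - KN x = y" using SF(3) by blast
  define l where "l = max (max l1 l2) (max l3 l4)"
  have sPm: "\<forall>y. \<exists>x\<in>D. l *\<^sub>R x - AP x = y"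
  proof
    fix y
    have "l \<ge> l1" by (simp add: l_def)
    then obtain x where x: "x \<in> D" "l *\<^sub>R x - A x - (- KP) x = y" using l1 by blast
    have "l *\<^sub>R x - AP x = l *\<^sub>R x - A x - (- KP) x"
      by (simp add: APa KP_def blinfun.minus_left algebra_simps)
    then show "\<exists>x\<in>D. l *\<^sub>R x - AP x = y" using x by metis
  qed
  have sNm: "\<forall>y. \<exists>x\<in>D. l *\<^sub>R x - AN x = y"
  proof
    fix y
    have "l \<ge> l2" by (simp add: l_def)
    then obtain x where x: "x \<in> D" "l *\<^sub>R x - A x - (- KN) x = y" using l2 by blast
    have "l *\<^sub>R x - AN x = l *\<^sub>R x - A x - (- KN) x"
      by (simp add: ANa KN_def blinfun.minus_left algebra_simps)
    then show "\<exists>x\<in>D. l *\<^sub>R x - AN x = y" using x by metis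
  qed
  have sPp: "\<forall>y. \<exists>x\<in>D. l *\<^sub>R x + AP x = y"
  proof
    fix y
    have "l \<ge> l3" by (simp add: l_def)
    then obtain x where x: "x \<in> D" "l *\<^sub>R x + A x - KP x = y" using l3 by blast
    have "l *\<^sub>R x + AP x = l *\<^sub>R x + A x - KP x"
      by (simp add: APa KP_def blinfun.minus_left algebra_simps)
    then show "\<exists>x\<in>D. l *\<^sub>R x + AP x = y" using x by metis
  qed
  have sNp: "\<forall>y. \<exists>x\<in>D. l *\<^sub>R x + AN x = y"
  proof
    fix y
    have "l \<ge> l4" by (simp add: l_def)
    then obtain x where x: "x \<in> D" "l *\<^sub>R x + A x - KN x = y" using l4 by blast
    have "l *\<^sub>R x + AN x = l *\<^sub>R x + A x - KN x"
      by (simp add: ANa KN_def blinfun.minus_left algebra_simps)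
    then show "\<exists>x\<in>D. l *\<^sub>R x + AN x = y" using x by metis
  qed
  have domN: "Di v \<in> D" if "\<forall>x\<in>D. inner (AN x) v = inner x z" for v z
    by (rule dom_lemma[OF inv E sPm sNp that])
  have domP: "Di v \<in> D" if "\<forall>x\<in>D. inner (AP x) v = inner x z" for v z
    by (rule dom_lemma[OF inv E' sNm sPp that])
  have adj_eq: "adj_op D A' y = z" if "\<forall>x\<in>D. inner (A' x) y = inner x z" for A' y z
  proof -
    have "\<forall>x\<in>D. inner (A' x) y = inner x (adj_op D A' y)"
      unfolding adj_op_def by (rule someI[of _ z]) (rule that)
    then show ?thesis using that by (intro inner_eq_dense[OF dense]) auto
  qed
  define w where "w Y x = - Q x - Y (A x) + Y (KB (Y x))" for Y :: "'x \<Rightarrow>\<^sub>L 'x" and x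
  have ricdom: "\<forall>x'\<in>D. inner (A x') (Y x) = inner x' (w Y x)"
    if "riccati_sol D A B Bs Ri Q Y" "x \<in> D" for Y x
  proof
    fix x' assume x': "x' \<in> D"
    have "inner (Y (A x)) x' + inner (Y x) (A x') - inner (Y (KB (Y x))) x' = - inner (Q x) x'"
      by (rule ric[OF that x'])
    then show "inner (A x') (Y x) = inner x' (w Y x)"
      by (simp add: w_def inner_add_right inner_diff_right inner_commute)
  qed
  have conj_adj: "\<forall>x\<in>D. Dl x \<in> adj_dom D AN \<and> adj_op D AN (Dl x) = - Dl (AP x)"
  proof
    fix x assume x: "x \<in> D"
    have wit: "\<forall>y\<in>D. inner (AN y) (Dl x) = inner y (- Dl (AP x))"
    proof
      fix y assume y: "y \<in> D"
      have "inner (Dl (AP x)) y + inner (Dl x) (AN y) = 0" by (rule E[OF x y])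
      then show "inner (AN y) (Dl x) = inner y (- Dl (AP x))" by (simp add: inner_commute)
    qed
    show "Dl x \<in> adj_dom D AN \<and> adj_op D AN (Dl x) = - Dl (AP x)"
    proof
      show "Dl x \<in> adj_dom D AN" unfolding adj_dom_def using wit by blast
      show "adj_op D AN (Dl x) = - Dl (AP x)" by (rule adj_eq[OF wit])
    qed
  qed
  have k1: "Di (P v) - Di (N v) = v" for v using DiD[of v] by (simp add: Dla blinfun.diff_right)
  have k2: "P (Di v) - N (Di v) = v" for v using DDi[of v] by (simp add: Dla)
  have k3: "N (Di (P v)) = N v + N (Di (N v))" for v
  proof -
    have "Di (P v) = v + Di (N v)" using k1[of v] by (simp add: algebra_simps)
    then show ?thesis by (simp add: blinfun.add_right)
  qed
  have k4: "P (Di (N v)) = N v + N (Di (N v))" for v using k2[of "N v"] by (simp add: algebra_simps)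
  have TT: "Tinv_mat Di N P (Tmat N P z) = z \<and> Tmat N P (Tinv_mat Di N P z) = z" for z
  proof -
    obtain a b where z: "z = (a, b)" by (cases z)
    have "Tinv_mat Di N P (Tmat N P z) = (Di (P a) - Di (N a), Di (P b) - Di (N b))"
      by (simp add: z Tinv_mat_def Tmat_def blinfun.add_right blinfun.diff_right blinfun.minus_right algebra_simps)
    moreover have "Tmat N P (Tinv_mat Di N P z) = (Di (P a) - Di (N a), P (Di b) - N (Di b))"
      by (simp add: z Tinv_mat_def Tmat_def blinfun.add_right blinfun.diff_right blinfun.minus_right k3 k4 algebra_simps)
    ultimately show ?thesis by (simp add: z k1 k2)
  qed
  have wA: "\<forall>x\<in>D. inner (A x) (- N a - P b) = inner x (- w N a - w P b)" if "a \<in> D" "b \<in> D" for a b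
    using ricdom[OF N_ric that(1)] ricdom[OF P_ric that(2)]
    by (simp add: inner_diff_right inner_minus_right)
  have dom: "Tmat N P z \<in> hamiltonian_dom D A \<longleftrightarrow> z \<in> D \<times> D" for z
  proof -
    obtain a b where z: "z = (a, b)" by (cases z)
    have T: "Tmat N P z = (a + b, - N a - P b)" by (simp add: z Tmat_def)
    show ?thesis
    proof
      assume "z \<in> D \<times> D"
      then have ab: "a \<in> D" "b \<in> D" by (auto simp: z)
      show "Tmat N P z \<in> hamiltonian_dom D A"
        using D_add(1)[OF ab] wA[OF ab] by (auto simp: T hamiltonian_dom_def adj_dom_def)
    next
      assume "Tmat N P z \<in> hamiltonian_dom D A"
      then have u: "a + b \<in> D" and "\<exists>zz. \<forall>x\<in>D. inner (A x) (- N a - P b) = inner x zz"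
        by (auto simp: T hamiltonian_dom_def adj_dom_def)
      then obtain zz where zz: "\<forall>x\<in>D. inner (A x) (- N a - P b) = inner x zz" by blast
      have Dla2: "Dl a = (- N a - P b) + P (a + b)" by (simp add: Dla blinfun.add_right)
      have wa: "\<forall>x\<in>D. inner (A x) (Dl a) = inner x (zz + w P (a + b))"
        using zz ricdom[OF P_ric u] by (simp add: Dla2 inner_add_right)
      have "\<forall>x\<in>D. inner (AN x) (Dl a) = inner x (zz + w P (a + b) - N (KB (Dl a)))"
      proof
        fix x assume x: "x \<in> D"
        have "inner (KB (N x)) (Dl a) = inner x (N (KB (Dl a)))" by (simp add: KB_sym sa[OF N_sa])
        then show "inner (AN x) (Dl a) = inner x (zz + w P (a + b) - N (KB (Dl a)))"
          using wa x by (simp add: ANa inner_diff_left inner_diff_right)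
      qed
      then have "Di (Dl a) \<in> D" by (rule domN)
      then have a: "a \<in> D" by (simp add: DiD)
      have "a + b - a \<in> D" by (rule D_diff(1)[OF u a])
      then show "z \<in> D \<times> D" using a by (simp add: z)
    qed
  qed
  have ham: "Tinv_mat Di N P (hamiltonian D A B Bs Ri Q (Tmat N P z)) = (AN (fst z), AP (snd z))"
    if "z \<in> D \<times> D" for z
  proof -
    obtain a b where z: "z = (a, b)" by (cases z)
    have ab: "a \<in> D" "b \<in> D" using that by (simp_all add: z)
    have adj: "adj_op D A (- N a - P b) = - w N a - w P b" by (rule adj_eq[OF wA[OF ab]])
    have "hamiltonian D A B Bs Ri Q (Tmat N P z) = Tmat N P (AN a, AP b)"
      by (simp add: z hamiltonian_def Tmat_def adj D_add(2)[OF ab] w_def ANa APa KBa[symmetric]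
          blinfun.add_right blinfun.diff_right blinfun.minus_right algebra_simps)
    then show ?thesis using TT[of "(AN a, AP b)"] by (simp add: z)
  qed
  have AN0: "AN 0 = 0" by (simp add: ANa A0)
  have AP0: "AP 0 = 0" by (simp add: APa A0)
  have rho1: "in_resolvent D AP (- m)" if "in_resolvent D AN m" for m
    by (rule spec_lemma[OF inv E dense Dneg D0 AN0 domN that])
  have rho2: "in_resolvent D AN (- m)" if "in_resolvent D AP m" for m
    by (rule spec_lemma[OF inv E' dense Dneg D0 AP0 domP that])
  have spec: "op_spectrum D AP = uminus ` op_spectrum D AN"
  proof (intro set_eqI iffI)
    fix m assume "m \<in> op_spectrum D AP"
    then have "\<not> in_resolvent D AP m" by (simp add: op_spectrum_def)
    then have "\<not> in_resolvent D AN (- m)" using rho1[of "- m"] by auto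
    then have "- m \<in> op_spectrum D AN" by (simp add: op_spectrum_def)
    then show "m \<in> uminus ` op_spectrum D AN" by (metis image_eqI minus_minus)
  next
    fix m assume "m \<in> uminus ` op_spectrum D AN"
    then obtain k where k: "m = - k" "\<not> in_resolvent D AN k" by (auto simp: op_spectrum_def)
    then have "\<not> in_resolvent D AP m" using rho2[of m] by auto
    then show "m \<in> op_spectrum D AP" by (simp add: op_spectrum_def)
  qed
  show ?thesis
    unfolding Dl_def[symmetric] AP_def[symmetric] AN_def[symmetric]
    using Dl_sa Dl_pd inv TT dom ham conj_adj spec by blast
qed

end
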